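(* For every integer $q\ge1$ and every integer $k\ge0$ with $k\ne q+2$, \[ \frac{q^{2}}{8(2k-2q-3)(k-q-2)}S_{q}(k)+\frac{4kq-4q^{2}+2k-7q-4}{4(2k-2q-3)(k-q-2)}\, S_{q+1}(k)+S_{q+2}(k)=0, \] where $S_q(k)=\sum_{l_1,l_2\in\mathbb Z}H_q(l_1,l_2,k)$.
   Context: $(z)_k=z(z+1)\cdots(z+k-1)$ denotes the rising factorial. For integers $l_1,l_2,k$ and $q\ge1$, \[ H_q(l_{1},l_{2},k)=\frac{(-1)^{l_1+l_2}\left(-\frac{1}{2}\right)_{l_1} \left(-\frac{1}{2}\right)_{l_2} \left(\frac{1}{2}\right)_{q-l_{1}} \left(\frac{1}{2}\right)_{q-l_{2}}}{(2q-l_{1}-l_{2}-k)!\,(l_{2}-l_{1}+k)!\,(l_{1}-l_{2}+k)!\,(l_{1}+l_{2}-k)!}, \] where Pochhammer symbols and factorials are expressed via the Gamma function, with $1/\Gamma$ vanishing at non-positive integers (so only finitely many terms are non-zero). *)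

theory Defs
  imports "HOL-Analysis.Analysis"
begin

definition poch_int :: "real \<Rightarrow> int \<Rightarrow> real" where
  "poch_int a n = Gamma (a + of_int n) / Gamma a"

text \<open>Reciprocal factorial 1/n! = 1/Gamma(n+1), vanishing for negative integers n.\<close>
definition rfact_int :: "int \<Rightarrow> real" where
  "rfact_int n = rGamma (of_int n + 1)"

definition H :: "int \<Rightarrow> int \<Rightarrow> int \<Rightarrow> int \<Rightarrow> real" where
  "H q l1 l2 k =
     (-1) powi (l1 + l2) * poch_int (-1/2) l1 * poch_int (-1/2) l2
       * poch_int (1/2) (q - l1) * poch_int (1/2) (q - l2)
       * rfact_int (2*q - l1 - l2 - k) * rfact_int (l2 - l1 + k)
       * rfact_int (l1 - l2 + k) * rfact_int (l1 + l2 - k)"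

definition S :: "int \<Rightarrow> int \<Rightarrow> real" where
  "S q k = (\<Sum>\<^sub>\<infinity>(l1, l2) \<in> (UNIV :: (int \<times> int) set). H q l1 l2 k)"

end

theory Submission
  imports Defs
begin

lemma half_not_nonpos_int:
  fixes n :: int
  shows "(1/2::real) + of_int n \<notin> \<int>\<^sub>\<le>\<^sub>0" "(-1/2::real) + of_int n \<notin> \<int>\<^sub>\<le>\<^sub>0"
proof -
  { fix c :: real assume c: "c = 1/2 \<or> c = -1/2" and "c + of_int n \<in> \<int>\<^sub>\<le>\<^sub>0"
    then obtain m where m: "c + of_int n = of_int m" by (auto elim!: nonpos_Ints_cases)
    hence "2 * c = 2 * of_int (m - n)" by simp
    hence "2 * c = of_int (2 * (m - n))" by simp
    moreover have "2 * c = 1 \<or> 2 * c = -1" using c by auto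
    ultimately have "of_int (2 * (m - n)) = (1::real) \<or> of_int (2 * (m - n)) = (-1::real)" by auto
    hence "2 * (m - n) = 1 \<or> 2 * (m - n) = -1" by linarith
    hence False by presburger }
  thus "(1/2::real) + of_int n \<notin> \<int>\<^sub>\<le>\<^sub>0" "(-1/2::real) + of_int n \<notin> \<int>\<^sub>\<le>\<^sub>0" by auto
qed

lemma pm_up: "poch_int (-1/2) (n + 1) = (of_int n - 1/2) * poch_int (-1/2) n"
proof -
  have "Gamma ((-1/2::real) + of_int n + 1) = ((-1/2) + of_int n) * Gamma ((-1/2) + of_int n)"
    using Gamma_plus1[OF half_not_nonpos_int(2)[of n]] by simp
  thus ?thesis unfolding poch_int_def by (simp add: algebra_simps)
qed

lemma pp_up: "poch_int (1/2) (n + 1) = (of_int n + 1/2) * poch_int (1/2) n"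
proof -
  have "Gamma ((1/2::real) + of_int n + 1) = ((1/2) + of_int n) * Gamma ((1/2) + of_int n)"
    using Gamma_plus1[OF half_not_nonpos_int(1)[of n]] by simp
  thus ?thesis unfolding poch_int_def by (simp add: algebra_simps)
qed

lemma rf_down: "rfact_int n = (of_int n + 1) * rfact_int (n + 1)"
  unfolding rfact_int_def using rGamma_plus1[of "of_int n + 1 :: real"] by (simp add: algebra_simps)

lemma rf_neg: "n < 0 \<Longrightarrow> rfact_int n = 0"
proof -
  assume "n < 0"
  hence "(of_int (n + 1) :: real) \<in> \<int>\<^sub>\<le>\<^sub>0" by (intro nonpos_Ints_of_int) simp
  thus ?thesis unfolding rfact_int_def by (intro rGamma_nonpos_Int) simp
qed

lemma rf_nz: "rfact_int n \<noteq> 0 \<Longrightarrow> n \<ge> 0"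
  using rf_neg by force

lemma rf0: "rfact_int 0 = 1" unfolding rfact_int_def by simp

lemma pmS0: "m = n \<Longrightarrow> poch_int (-1/2) n = poch_int (-1/2) m" by simp
lemma ppS0: "m = n \<Longrightarrow> poch_int (1/2) n = poch_int (1/2) m" by simp
lemma rfS0: "m = n \<Longrightarrow> rfact_int n = rfact_int m" by simp

lemma pmS1: assumes "m = n - 1" "c0 = 2 * m - 1" shows "poch_int (-1/2) n = (of_int c0 / 2) * poch_int (-1/2) m"
proof -
  have n: "n = m + 1" using assms by simp
  show ?thesis unfolding n pm_up assms(2) by (simp add: field_simps)
qed
lemma pmS2: assumes "m = n - 2" "c0 = 2 * m - 1" "c1 = 2 * m + 1"
  shows "poch_int (-1/2) n = (of_int c0 / 2) * (of_int c1 / 2) * poch_int (-1/2) m"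
proof -
  have a: "poch_int (-1/2) n = (of_int c1 / 2) * poch_int (-1/2) (m + 1)" by (rule pmS1) (use assms in simp_all)
  have b: "poch_int (-1/2) (m + 1) = (of_int c0 / 2) * poch_int (-1/2) m" by (rule pmS1) (use assms in simp_all)
  show ?thesis unfolding a b by (simp add: ac_simps)
qed
lemma ppS1: assumes "m = n - 1" "c0 = 2 * m + 1" shows "poch_int (1/2) n = (of_int c0 / 2) * poch_int (1/2) m"
proof -
  have n: "n = m + 1" using assms by simp
  show ?thesis unfolding n pp_up assms(2) by (simp add: field_simps)
qed
lemma ppS2: assumes "m = n - 2" "c0 = 2 * m + 1" "c1 = 2 * m + 3"
  shows "poch_int (1/2) n = (of_int c0 / 2) * (of_int c1 / 2) * poch_int (1/2) m"
proof -
  have a: "poch_int (1/2) n = (of_int c1 / 2) * poch_int (1/2) (m + 1)" by (rule ppS1) (use assms in simp_all)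
  have b: "poch_int (1/2) (m + 1) = (of_int c0 / 2) * poch_int (1/2) m" by (rule ppS1) (use assms in simp_all)
  show ?thesis using a b by simp
qed
lemma ppS3: assumes "m = n - 3" "c0 = 2 * m + 1" "c1 = 2 * m + 3" "c2 = 2 * m + 5"
  shows "poch_int (1/2) n = (of_int c0 / 2) * (of_int c1 / 2) * (of_int c2 / 2) * poch_int (1/2) m"
proof -
  have a: "poch_int (1/2) n = (of_int c2 / 2) * poch_int (1/2) (m + 2)" by (rule ppS1) (use assms in simp_all)
  have b: "poch_int (1/2) (m + 2) = (of_int c0 / 2) * (of_int c1 / 2) * poch_int (1/2) m" by (rule ppS2) (use assms in simp_all)
  show ?thesis using a b by simp
qed
lemma ppS4: assumes "m = n - 4" "c0 = 2 * m + 1" "c1 = 2 * m + 3" "c2 = 2 * m + 5" "c3 = 2 * m + 7"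
  shows "poch_int (1/2) n = (of_int c0 / 2) * (of_int c1 / 2) * (of_int c2 / 2) * (of_int c3 / 2) * poch_int (1/2) m"
proof -
  have a: "poch_int (1/2) n = (of_int c3 / 2) * poch_int (1/2) (m + 3)" by (rule ppS1) (use assms in simp_all)
  have b: "poch_int (1/2) (m + 3) = (of_int c0 / 2) * (of_int c1 / 2) * (of_int c2 / 2) * poch_int (1/2) m" by (rule ppS3) (use assms in simp_all)
  show ?thesis using a b by simp
qed
lemma rfS1: assumes "m = n + 1" "c1 = n + 1" shows "rfact_int n = of_int c1 * rfact_int m"
  using rf_down[of n] assms by simp
lemma rfS2: assumes "m = n + 2" "c1 = n + 1" "c2 = n + 2"
  shows "rfact_int n = of_int c1 * of_int c2 * rfact_int m"
proof -
  have a: "rfact_int n = of_int c1 * rfact_int (n + 1)" by (rule rfS1) (use assms in simp_all)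
  have b: "rfact_int (n + 1) = of_int c2 * rfact_int m" by (rule rfS1) (use assms in simp_all)
  show ?thesis using a b by simp
qed
lemma rfS3: assumes "m = n + 3" "c1 = n + 1" "c2 = n + 2" "c3 = n + 3"
  shows "rfact_int n = of_int c1 * of_int c2 * of_int c3 * rfact_int m"
proof -
  have a: "rfact_int n = of_int c1 * of_int c2 * rfact_int (n + 2)" by (rule rfS2) (use assms in simp_all)
  have b: "rfact_int (n + 2) = of_int c3 * rfact_int m" by (rule rfS1) (use assms in simp_all)
  show ?thesis using a b by simp
qed
lemma rfS4: assumes "m = n + 4" "c1 = n + 1" "c2 = n + 2" "c3 = n + 3" "c4 = n + 4"
  shows "rfact_int n = of_int c1 * of_int c2 * of_int c3 * of_int c4 * rfact_int m"
proof -
  have a: "rfact_int n = of_int c1 * of_int c2 * of_int c3 * rfact_int (n + 3)" by (rule rfS3) (use assms in simp_all)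
  have b: "rfact_int (n + 3) = of_int c4 * rfact_int m" by (rule rfS1) (use assms in simp_all)
  show ?thesis using a b by simp
qed
lemma rfS5: assumes "m = n + 5" "c1 = n + 1" "c2 = n + 2" "c3 = n + 3" "c4 = n + 4" "c5 = n + 5"
  shows "rfact_int n = of_int c1 * of_int c2 * of_int c3 * of_int c4 * of_int c5 * rfact_int m"
proof -
  have a: "rfact_int n = of_int c1 * of_int c2 * of_int c3 * of_int c4 * rfact_int (n + 4)" by (rule rfS4) (use assms in simp_all)
  have b: "rfact_int (n + 4) = of_int c5 * rfact_int m" by (rule rfS1) (use assms in simp_all)
  show ?thesis using a b by simp
qed
lemma rfS6: assumes "m = n + 6" "c1 = n + 1" "c2 = n + 2" "c3 = n + 3" "c4 = n + 4" "c5 = n + 5" "c6 = n + 6"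
  shows "rfact_int n = of_int c1 * of_int c2 * of_int c3 * of_int c4 * of_int c5 * of_int c6 * rfact_int m"
proof -
  have a: "rfact_int n = of_int c1 * of_int c2 * of_int c3 * of_int c4 * of_int c5 * rfact_int (n + 5)" by (rule rfS5) (use assms in simp_all)
  have b: "rfact_int (n + 5) = of_int c6 * rfact_int m" by (rule rfS1) (use assms in simp_all)
  show ?thesis using a b by simp
qed


definition Bs :: "int \<Rightarrow> int \<Rightarrow> int \<Rightarrow> int \<Rightarrow> real" where
  "Bs q k l1 l2 = (-1) powi (l1 + l2) * poch_int (-1/2) (l1 - 1) * poch_int (-1/2) (l2 - 1)
     * poch_int (1/2) (q - l1 - 1) * poch_int (1/2) (q - l2 - 1)
     * rfact_int (2 * q - l1 - l2 - k + 4) * rfact_int (l2 - l1 + k) * rfact_int (l1 - l2 + k) * rfact_int (l1 + l2 - k)"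

definition E1 :: "int \<Rightarrow> int \<Rightarrow> int \<Rightarrow> int \<Rightarrow> real" where
  "E1 q k l1 l2 = (-1) powi (l1 + l2) * poch_int (-1/2) (l1 - 1) * poch_int (-1/2) (l2 - 1) * poch_int (1/2) (q - l1) * poch_int (1/2) (q - l2 - 1) * rfact_int (2 * q - l1 - l2 - k + 4) * rfact_int (l2 - l1 + k) * rfact_int (l1 - l2 + k - 1) * rfact_int (l1 + l2 - k - 1)"

definition E2 :: "int \<Rightarrow> int \<Rightarrow> int \<Rightarrow> int \<Rightarrow> real" where
  "E2 q k l1 l2 = (-1) powi (l1 + l2) * poch_int (-1/2) (l1 - 1) * poch_int (-1/2) (l2 - 1) * poch_int (1/2) (q - l1 - 1) * poch_int (1/2) (q - l2) * rfact_int (2 * q - l1 - l2 - k + 4) * rfact_int (l2 - l1 + k - 1) * rfact_int (l1 - l2 + k) * rfact_int (l1 + l2 - k - 1)"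

definition hq :: "int \<Rightarrow> int \<Rightarrow> int \<Rightarrow> int \<Rightarrow> int" where
  "hq q k l1 l2 = (2 * l1 - 3) * (2 * l2 - 3) * (2 * q - 2 * l1 - 1) * (2 * q - 2 * l2 - 1) * (2 * q - k - l1 - l2 + 1) * (2 * q - k - l1 - l2 + 2) * (2 * q - k - l1 - l2 + 3) * (2 * q - k - l1 - l2 + 4) * 2 * 2 * 2 * 2"

lemma Hq_eq_abs:
  fixes s y0 y1 y2 y3 y4 y5 y6 y7 a0 a1 a2 a3 a4 a5 a6 a7 :: real
  shows "s * ((a0 / 2) * y0) * ((a1 / 2) * y1) * ((a2 / 2) * y2) * ((a3 / 2) * y3) * (a4 * a5 * a6 * a7 * y4) * y5 * y6 * y7 = (a0 * a1 * a2 * a3 * a4 * a5 * a6 * a7 * 2 * 2 * 2 * 2) / 256 * (s * y0 * y1 * y2 * y3 * y4 * y5 * y6 * y7)"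
  by (simp add: field_simps)

lemma Hq_eq:
  "H q l1 l2 k = of_int (hq q k l1 l2) / 256 * Bs q k l1 l2"
proof -
  have e0: "poch_int (-1/2) (l1) = (of_int (2 * l1 - 3) / 2) * poch_int (-1/2) (l1 - 1)" by (rule pmS1) (simp_all add: algebra_simps)
  have e1: "poch_int (-1/2) (l2) = (of_int (2 * l2 - 3) / 2) * poch_int (-1/2) (l2 - 1)" by (rule pmS1) (simp_all add: algebra_simps)
  have e2: "poch_int (1/2) (q - l1) = (of_int (2 * q - 2 * l1 - 1) / 2) * poch_int (1/2) (q - l1 - 1)" by (rule ppS1) (simp_all add: algebra_simps)
  have e3: "poch_int (1/2) (q - l2) = (of_int (2 * q - 2 * l2 - 1) / 2) * poch_int (1/2) (q - l2 - 1)" by (rule ppS1) (simp_all add: algebra_simps)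
  have e4: "rfact_int (2 * q - l1 - l2 - k) = of_int (2 * q - k - l1 - l2 + 1) * of_int (2 * q - k - l1 - l2 + 2) * of_int (2 * q - k - l1 - l2 + 3) * of_int (2 * q - k - l1 - l2 + 4) * rfact_int (2 * q - l1 - l2 - k + 4)" by (rule rfS4) (simp_all add: algebra_simps)
  show ?thesis unfolding H_def e0 e1 e2 e3 e4 hq_def Bs_def
    by (simp only: of_int_mult of_int_minus of_int_numeral) (rule Hq_eq_abs)
qed

definition hq1 :: "int \<Rightarrow> int \<Rightarrow> int \<Rightarrow> int \<Rightarrow> int" where
  "hq1 q k l1 l2 = (2 * l1 - 3) * (2 * l2 - 3) * (2 * q - 2 * l1 - 1) * (2 * q - 2 * l1 + 1) * (2 * q - 2 * l2 - 1) * (2 * q - 2 * l2 + 1) * (2 * q - k - l1 - l2 + 3) * (2 * q - k - l1 - l2 + 4) * 2 * 2"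

lemma Hq1_eq_abs:
  fixes s y0 y1 y2 y3 y4 y5 y6 y7 a0 a1 a2 a3 a4 a5 a6 a7 :: real
  shows "s * ((a0 / 2) * y0) * ((a1 / 2) * y1) * ((a2 / 2) * (a3 / 2) * y2) * ((a4 / 2) * (a5 / 2) * y3) * (a6 * a7 * y4) * y5 * y6 * y7 = (a0 * a1 * a2 * a3 * a4 * a5 * a6 * a7 * 2 * 2) / 256 * (s * y0 * y1 * y2 * y3 * y4 * y5 * y6 * y7)"
  by (simp add: field_simps)

lemma Hq1_eq:
  "H (q + 1) l1 l2 k = of_int (hq1 q k l1 l2) / 256 * Bs q k l1 l2"
proof -
  have e0: "poch_int (-1/2) (l1) = (of_int (2 * l1 - 3) / 2) * poch_int (-1/2) (l1 - 1)" by (rule pmS1) (simp_all add: algebra_simps)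
  have e1: "poch_int (-1/2) (l2) = (of_int (2 * l2 - 3) / 2) * poch_int (-1/2) (l2 - 1)" by (rule pmS1) (simp_all add: algebra_simps)
  have e2: "poch_int (1/2) ((q + 1) - l1) = (of_int (2 * q - 2 * l1 - 1) / 2) * (of_int (2 * q - 2 * l1 + 1) / 2) * poch_int (1/2) (q - l1 - 1)" by (rule ppS2) (simp_all add: algebra_simps)
  have e3: "poch_int (1/2) ((q + 1) - l2) = (of_int (2 * q - 2 * l2 - 1) / 2) * (of_int (2 * q - 2 * l2 + 1) / 2) * poch_int (1/2) (q - l2 - 1)" by (rule ppS2) (simp_all add: algebra_simps)
  have e4: "rfact_int (2 * (q + 1) - l1 - l2 - k) = of_int (2 * q - k - l1 - l2 + 3) * of_int (2 * q - k - l1 - l2 + 4) * rfact_int (2 * q - l1 - l2 - k + 4)" by (rule rfS2) (simp_all add: algebra_simps)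
  show ?thesis unfolding H_def e0 e1 e2 e3 e4 hq1_def Bs_def
    by (simp only: of_int_mult of_int_minus of_int_numeral) (rule Hq1_eq_abs)
qed

definition hq2 :: "int \<Rightarrow> int \<Rightarrow> int \<Rightarrow> int \<Rightarrow> int" where
  "hq2 q k l1 l2 = (2 * l1 - 3) * (2 * l2 - 3) * (2 * q - 2 * l1 - 1) * (2 * q - 2 * l1 + 1) * (2 * q - 2 * l1 + 3) * (2 * q - 2 * l2 - 1) * (2 * q - 2 * l2 + 1) * (2 * q - 2 * l2 + 3)"

lemma Hq2_eq_abs:
  fixes s y0 y1 y2 y3 y4 y5 y6 y7 a0 a1 a2 a3 a4 a5 a6 a7 :: real
  shows "s * ((a0 / 2) * y0) * ((a1 / 2) * y1) * ((a2 / 2) * (a3 / 2) * (a4 / 2) * y2) * ((a5 / 2) * (a6 / 2) * (a7 / 2) * y3) * y4 * y5 * y6 * y7 = (a0 * a1 * a2 * a3 * a4 * a5 * a6 * a7) / 256 * (s * y0 * y1 * y2 * y3 * y4 * y5 * y6 * y7)"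
  by (simp add: field_simps)

lemma Hq2_eq:
  "H (q + 2) l1 l2 k = of_int (hq2 q k l1 l2) / 256 * Bs q k l1 l2"
proof -
  have e0: "poch_int (-1/2) (l1) = (of_int (2 * l1 - 3) / 2) * poch_int (-1/2) (l1 - 1)" by (rule pmS1) (simp_all add: algebra_simps)
  have e1: "poch_int (-1/2) (l2) = (of_int (2 * l2 - 3) / 2) * poch_int (-1/2) (l2 - 1)" by (rule pmS1) (simp_all add: algebra_simps)
  have e2: "poch_int (1/2) ((q + 2) - l1) = (of_int (2 * q - 2 * l1 - 1) / 2) * (of_int (2 * q - 2 * l1 + 1) / 2) * (of_int (2 * q - 2 * l1 + 3) / 2) * poch_int (1/2) (q - l1 - 1)" by (rule ppS3) (simp_all add: algebra_simps)
  have e3: "poch_int (1/2) ((q + 2) - l2) = (of_int (2 * q - 2 * l2 - 1) / 2) * (of_int (2 * q - 2 * l2 + 1) / 2) * (of_int (2 * q - 2 * l2 + 3) / 2) * poch_int (1/2) (q - l2 - 1)" by (rule ppS3) (simp_all add: algebra_simps)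
  have e4: "rfact_int (2 * (q + 2) - l1 - l2 - k) = rfact_int (2 * q - l1 - l2 - k + 4)" by (rule rfS0) (simp_all add: algebra_simps)
  show ?thesis unfolding H_def e0 e1 e2 e3 e4 hq2_def Bs_def
    by (simp only: of_int_mult of_int_minus of_int_numeral) (rule Hq2_eq_abs)
qed

definition ee1 :: "int \<Rightarrow> int \<Rightarrow> int \<Rightarrow> int \<Rightarrow> int" where
  "ee1 q k l1 l2 = (2 * q - 2 * l1 - 1) * (k + l1 - l2) * (l1 + l2 - k) * 2 * 2 * 2 * 2 * 2 * 2 * 2"

lemma E1_eq_abs:
  fixes s y0 y1 y2 y3 y4 y5 y6 y7 a0 a1 a2 :: real
  shows "s * y0 * y1 * ((a0 / 2) * y2) * y3 * y4 * y5 * (a1 * y6) * (a2 * y7) = (a0 * a1 * a2 * 2 * 2 * 2 * 2 * 2 * 2 * 2) / 256 * (s * y0 * y1 * y2 * y3 * y4 * y5 * y6 * y7)"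
  by (simp add: field_simps)

lemma E1_eq:
  "E1 q k l1 l2 = of_int (ee1 q k l1 l2) / 256 * Bs q k l1 l2"
proof -
  have e0: "poch_int (1/2) (q - l1) = (of_int (2 * q - 2 * l1 - 1) / 2) * poch_int (1/2) (q - l1 - 1)" by (rule ppS1) (simp_all add: algebra_simps)
  have e1: "rfact_int (l1 - l2 + k - 1) = of_int (k + l1 - l2) * rfact_int (l1 - l2 + k)" by (rule rfS1) (simp_all add: algebra_simps)
  have e2: "rfact_int (l1 + l2 - k - 1) = of_int (l1 + l2 - k) * rfact_int (l1 + l2 - k)" by (rule rfS1) (simp_all add: algebra_simps)
  show ?thesis unfolding E1_def e0 e1 e2 ee1_def Bs_def
    by (simp only: of_int_mult of_int_minus of_int_numeral) (rule E1_eq_abs)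
qed

definition ee1s :: "int \<Rightarrow> int \<Rightarrow> int \<Rightarrow> int \<Rightarrow> int" where
  "ee1s q k l1 l2 = - ((2 * l1 - 3) * (2 * q - k - l1 - l2 + 4) * (k + l2 - l1) * 2 * 2 * 2 * 2 * 2 * 2 * 2)"

lemma E1s_eq_abs:
  fixes s y0 y1 y2 y3 y4 y5 y6 y7 a0 a1 a2 :: real
  shows "(- s) * ((a0 / 2) * y0) * y1 * y2 * y3 * (a1 * y4) * (a2 * y5) * y6 * y7 = (- (a0 * a1 * a2 * 2 * 2 * 2 * 2 * 2 * 2 * 2)) / 256 * (s * y0 * y1 * y2 * y3 * y4 * y5 * y6 * y7)"
  by (simp add: field_simps)

lemma E1s_eq:
  "E1 q k (l1 + 1) l2 = of_int (ee1s q k l1 l2) / 256 * Bs q k l1 l2"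
proof -
  have e0: "(-1::real) powi ((l1 + 1) + l2) = - ((-1) powi (l1 + l2))" by (simp add: power_int_add)
  have e1: "poch_int (-1/2) ((l1 + 1) - 1) = (of_int (2 * l1 - 3) / 2) * poch_int (-1/2) (l1 - 1)" by (rule pmS1) (simp_all add: algebra_simps)
  have e2: "poch_int (1/2) (q - (l1 + 1)) = poch_int (1/2) (q - l1 - 1)" by (rule ppS0) (simp_all add: algebra_simps)
  have e3: "rfact_int (2 * q - (l1 + 1) - l2 - k + 4) = of_int (2 * q - k - l1 - l2 + 4) * rfact_int (2 * q - l1 - l2 - k + 4)" by (rule rfS1) (simp_all add: algebra_simps)
  have e4: "rfact_int (l2 - (l1 + 1) + k) = of_int (k + l2 - l1) * rfact_int (l2 - l1 + k)" by (rule rfS1) (simp_all add: algebra_simps)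
  have e5: "rfact_int ((l1 + 1) - l2 + k - 1) = rfact_int (l1 - l2 + k)" by (rule rfS0) (simp_all add: algebra_simps)
  have e6: "rfact_int ((l1 + 1) + l2 - k - 1) = rfact_int (l1 + l2 - k)" by (rule rfS0) (simp_all add: algebra_simps)
  show ?thesis unfolding E1_def e0 e1 e2 e3 e4 e5 e6 ee1s_def Bs_def
    by (simp only: of_int_mult of_int_minus of_int_numeral) (rule E1s_eq_abs)
qed

definition ee2 :: "int \<Rightarrow> int \<Rightarrow> int \<Rightarrow> int \<Rightarrow> int" where
  "ee2 q k l1 l2 = (2 * q - 2 * l2 - 1) * (k + l2 - l1) * (l1 + l2 - k) * 2 * 2 * 2 * 2 * 2 * 2 * 2"

lemma E2_eq_abs:
  fixes s y0 y1 y2 y3 y4 y5 y6 y7 a0 a1 a2 :: real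
  shows "s * y0 * y1 * y2 * ((a0 / 2) * y3) * y4 * (a1 * y5) * y6 * (a2 * y7) = (a0 * a1 * a2 * 2 * 2 * 2 * 2 * 2 * 2 * 2) / 256 * (s * y0 * y1 * y2 * y3 * y4 * y5 * y6 * y7)"
  by (simp add: field_simps)

lemma E2_eq:
  "E2 q k l1 l2 = of_int (ee2 q k l1 l2) / 256 * Bs q k l1 l2"
proof -
  have e0: "poch_int (1/2) (q - l2) = (of_int (2 * q - 2 * l2 - 1) / 2) * poch_int (1/2) (q - l2 - 1)" by (rule ppS1) (simp_all add: algebra_simps)
  have e1: "rfact_int (l2 - l1 + k - 1) = of_int (k + l2 - l1) * rfact_int (l2 - l1 + k)" by (rule rfS1) (simp_all add: algebra_simps)
  have e2: "rfact_int (l1 + l2 - k - 1) = of_int (l1 + l2 - k) * rfact_int (l1 + l2 - k)" by (rule rfS1) (simp_all add: algebra_simps)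
  show ?thesis unfolding E2_def e0 e1 e2 ee2_def Bs_def
    by (simp only: of_int_mult of_int_minus of_int_numeral) (rule E2_eq_abs)
qed

definition ee2s :: "int \<Rightarrow> int \<Rightarrow> int \<Rightarrow> int \<Rightarrow> int" where
  "ee2s q k l1 l2 = - ((2 * l2 - 3) * (2 * q - k - l1 - l2 + 4) * (k + l1 - l2) * 2 * 2 * 2 * 2 * 2 * 2 * 2)"

lemma E2s_eq_abs:
  fixes s y0 y1 y2 y3 y4 y5 y6 y7 a0 a1 a2 :: real
  shows "(- s) * y0 * ((a0 / 2) * y1) * y2 * y3 * (a1 * y4) * y5 * (a2 * y6) * y7 = (- (a0 * a1 * a2 * 2 * 2 * 2 * 2 * 2 * 2 * 2)) / 256 * (s * y0 * y1 * y2 * y3 * y4 * y5 * y6 * y7)"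
  by (simp add: field_simps)

lemma E2s_eq:
  "E2 q k l1 (l2 + 1) = of_int (ee2s q k l1 l2) / 256 * Bs q k l1 l2"
proof -
  have e0: "(-1::real) powi (l1 + (l2 + 1)) = - ((-1) powi (l1 + l2))" by (simp add: power_int_add)
  have e1: "poch_int (-1/2) ((l2 + 1) - 1) = (of_int (2 * l2 - 3) / 2) * poch_int (-1/2) (l2 - 1)" by (rule pmS1) (simp_all add: algebra_simps)
  have e2: "poch_int (1/2) (q - (l2 + 1)) = poch_int (1/2) (q - l2 - 1)" by (rule ppS0) (simp_all add: algebra_simps)
  have e3: "rfact_int (2 * q - l1 - (l2 + 1) - k + 4) = of_int (2 * q - k - l1 - l2 + 4) * rfact_int (2 * q - l1 - l2 - k + 4)" by (rule rfS1) (simp_all add: algebra_simps)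
  have e4: "rfact_int ((l2 + 1) - l1 + k - 1) = rfact_int (l2 - l1 + k)" by (rule rfS0) (simp_all add: algebra_simps)
  have e5: "rfact_int (l1 - (l2 + 1) + k) = of_int (k + l1 - l2) * rfact_int (l1 - l2 + k)" by (rule rfS1) (simp_all add: algebra_simps)
  have e6: "rfact_int (l1 + (l2 + 1) - k - 1) = rfact_int (l1 + l2 - k)" by (rule rfS0) (simp_all add: algebra_simps)
  show ?thesis unfolding E2_def e0 e1 e2 e3 e4 e5 e6 ee2s_def Bs_def
    by (simp only: of_int_mult of_int_minus of_int_numeral) (rule E2s_eq_abs)
qed

definition B1 :: "int \<Rightarrow> int \<Rightarrow> real" where
  "B1 q l = poch_int (-1/2) (l - 1) * poch_int (-1/2) (l - 1) * poch_int (1/2) (q - l - 1) * poch_int (1/2) (q - l - 1)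
     * rfact_int (2 * q - 2 * l + 6) * rfact_int (2 * l)"

definition t0 :: "int \<Rightarrow> int \<Rightarrow> int" where
  "t0 q l = (2 * l - 3) * (2 * l - 3) * (2 * q - 2 * l - 1) * (2 * q - 2 * l - 1) * (2 * q - 2 * l + 1) * (2 * q - 2 * l + 2) * (2 * q - 2 * l + 3) * (2 * q - 2 * l + 4) * (2 * q - 2 * l + 5) * (2 * q - 2 * l + 6) * 2 * 2 * 2 * 2"

lemma t0_eq_abs:
  fixes y0 y1 y2 y3 y4 y5 a0 a1 a2 a3 a4 a5 a6 a7 a8 a9 :: real
  shows "1 * ((a0 / 2) * y0) * ((a1 / 2) * y1) * ((a2 / 2) * y2) * ((a3 / 2) * y3) * (a4 * a5 * a6 * a7 * a8 * a9 * y4) * 1 * 1 * y5 = (a0 * a1 * a2 * a3 * a4 * a5 * a6 * a7 * a8 * a9 * 2 * 2 * 2 * 2) / 256 * (y0 * y1 * y2 * y3 * y4 * y5)"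
  by (simp add: field_simps)

lemma t0_eq:
  "H q l l 0 = of_int (t0 q l) / 256 * B1 q l"
proof -
  have e0: "(-1::real) powi (l + l) = 1" by (simp add: power_int_add power_int_mult_distrib flip: mult_2)
  have e1: "poch_int (-1/2) (l) = (of_int (2 * l - 3) / 2) * poch_int (-1/2) (l - 1)" by (rule pmS1) (simp_all add: algebra_simps)
  have e2: "poch_int (-1/2) (l) = (of_int (2 * l - 3) / 2) * poch_int (-1/2) (l - 1)" by (rule pmS1) (simp_all add: algebra_simps)
  have e3: "poch_int (1/2) (q - l) = (of_int (2 * q - 2 * l - 1) / 2) * poch_int (1/2) (q - l - 1)" by (rule ppS1) (simp_all add: algebra_simps)
  have e4: "poch_int (1/2) (q - l) = (of_int (2 * q - 2 * l - 1) / 2) * poch_int (1/2) (q - l - 1)" by (rule ppS1) (simp_all add: algebra_simps)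
  have e5: "rfact_int (2 * q - l - l - 0) = of_int (2 * q - 2 * l + 1) * of_int (2 * q - 2 * l + 2) * of_int (2 * q - 2 * l + 3) * of_int (2 * q - 2 * l + 4) * of_int (2 * q - 2 * l + 5) * of_int (2 * q - 2 * l + 6) * rfact_int (2 * q - 2 * l + 6)" by (rule rfS6) (simp_all add: algebra_simps)
  have e6: "rfact_int (l - l + 0) = 1" by (simp add: rf0)
  have e7: "rfact_int (l - l + 0) = 1" by (simp add: rf0)
  have e8: "rfact_int (l + l - 0) = rfact_int (2 * l)" by (rule rfS0) (simp_all add: algebra_simps)
  show ?thesis unfolding H_def e0 e1 e2 e3 e4 e5 e6 e7 e8 t0_def B1_def
    by (simp only: of_int_mult of_int_minus of_int_numeral) (rule t0_eq_abs)
qed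

definition t1 :: "int \<Rightarrow> int \<Rightarrow> int" where
  "t1 q l = (2 * l - 3) * (2 * l - 3) * (2 * q - 2 * l - 1) * (2 * q - 2 * l + 1) * (2 * q - 2 * l - 1) * (2 * q - 2 * l + 1) * (2 * q - 2 * l + 3) * (2 * q - 2 * l + 4) * (2 * q - 2 * l + 5) * (2 * q - 2 * l + 6) * 2 * 2"

lemma t1_eq_abs:
  fixes y0 y1 y2 y3 y4 y5 a0 a1 a2 a3 a4 a5 a6 a7 a8 a9 :: real
  shows "1 * ((a0 / 2) * y0) * ((a1 / 2) * y1) * ((a2 / 2) * (a3 / 2) * y2) * ((a4 / 2) * (a5 / 2) * y3) * (a6 * a7 * a8 * a9 * y4) * 1 * 1 * y5 = (a0 * a1 * a2 * a3 * a4 * a5 * a6 * a7 * a8 * a9 * 2 * 2) / 256 * (y0 * y1 * y2 * y3 * y4 * y5)"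
  by (simp add: field_simps)

lemma t1_eq:
  "H (q + 1) l l 0 = of_int (t1 q l) / 256 * B1 q l"
proof -
  have e0: "(-1::real) powi (l + l) = 1" by (simp add: power_int_add power_int_mult_distrib flip: mult_2)
  have e1: "poch_int (-1/2) (l) = (of_int (2 * l - 3) / 2) * poch_int (-1/2) (l - 1)" by (rule pmS1) (simp_all add: algebra_simps)
  have e2: "poch_int (-1/2) (l) = (of_int (2 * l - 3) / 2) * poch_int (-1/2) (l - 1)" by (rule pmS1) (simp_all add: algebra_simps)
  have e3: "poch_int (1/2) ((q + 1) - l) = (of_int (2 * q - 2 * l - 1) / 2) * (of_int (2 * q - 2 * l + 1) / 2) * poch_int (1/2) (q - l - 1)" by (rule ppS2) (simp_all add: algebra_simps)
  have e4: "poch_int (1/2) ((q + 1) - l) = (of_int (2 * q - 2 * l - 1) / 2) * (of_int (2 * q - 2 * l + 1) / 2) * poch_int (1/2) (q - l - 1)" by (rule ppS2) (simp_all add: algebra_simps)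
  have e5: "rfact_int (2 * (q + 1) - l - l - 0) = of_int (2 * q - 2 * l + 3) * of_int (2 * q - 2 * l + 4) * of_int (2 * q - 2 * l + 5) * of_int (2 * q - 2 * l + 6) * rfact_int (2 * q - 2 * l + 6)" by (rule rfS4) (simp_all add: algebra_simps)
  have e6: "rfact_int (l - l + 0) = 1" by (simp add: rf0)
  have e7: "rfact_int (l - l + 0) = 1" by (simp add: rf0)
  have e8: "rfact_int (l + l - 0) = rfact_int (2 * l)" by (rule rfS0) (simp_all add: algebra_simps)
  show ?thesis unfolding H_def e0 e1 e2 e3 e4 e5 e6 e7 e8 t1_def B1_def
    by (simp only: of_int_mult of_int_minus of_int_numeral) (rule t1_eq_abs)
qed

definition t2 :: "int \<Rightarrow> int \<Rightarrow> int" where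
  "t2 q l = (2 * l - 3) * (2 * l - 3) * (2 * q - 2 * l - 1) * (2 * q - 2 * l + 1) * (2 * q - 2 * l + 3) * (2 * q - 2 * l - 1) * (2 * q - 2 * l + 1) * (2 * q - 2 * l + 3) * (2 * q - 2 * l + 5) * (2 * q - 2 * l + 6)"

lemma t2_eq_abs:
  fixes y0 y1 y2 y3 y4 y5 a0 a1 a2 a3 a4 a5 a6 a7 a8 a9 :: real
  shows "1 * ((a0 / 2) * y0) * ((a1 / 2) * y1) * ((a2 / 2) * (a3 / 2) * (a4 / 2) * y2) * ((a5 / 2) * (a6 / 2) * (a7 / 2) * y3) * (a8 * a9 * y4) * 1 * 1 * y5 = (a0 * a1 * a2 * a3 * a4 * a5 * a6 * a7 * a8 * a9) / 256 * (y0 * y1 * y2 * y3 * y4 * y5)"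
  by (simp add: field_simps)

lemma t2_eq:
  "H (q + 2) l l 0 = of_int (t2 q l) / 256 * B1 q l"
proof -
  have e0: "(-1::real) powi (l + l) = 1" by (simp add: power_int_add power_int_mult_distrib flip: mult_2)
  have e1: "poch_int (-1/2) (l) = (of_int (2 * l - 3) / 2) * poch_int (-1/2) (l - 1)" by (rule pmS1) (simp_all add: algebra_simps)
  have e2: "poch_int (-1/2) (l) = (of_int (2 * l - 3) / 2) * poch_int (-1/2) (l - 1)" by (rule pmS1) (simp_all add: algebra_simps)
  have e3: "poch_int (1/2) ((q + 2) - l) = (of_int (2 * q - 2 * l - 1) / 2) * (of_int (2 * q - 2 * l + 1) / 2) * (of_int (2 * q - 2 * l + 3) / 2) * poch_int (1/2) (q - l - 1)" by (rule ppS3) (simp_all add: algebra_simps)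
  have e4: "poch_int (1/2) ((q + 2) - l) = (of_int (2 * q - 2 * l - 1) / 2) * (of_int (2 * q - 2 * l + 1) / 2) * (of_int (2 * q - 2 * l + 3) / 2) * poch_int (1/2) (q - l - 1)" by (rule ppS3) (simp_all add: algebra_simps)
  have e5: "rfact_int (2 * (q + 2) - l - l - 0) = of_int (2 * q - 2 * l + 5) * of_int (2 * q - 2 * l + 6) * rfact_int (2 * q - 2 * l + 6)" by (rule rfS2) (simp_all add: algebra_simps)
  have e6: "rfact_int (l - l + 0) = 1" by (simp add: rf0)
  have e7: "rfact_int (l - l + 0) = 1" by (simp add: rf0)
  have e8: "rfact_int (l + l - 0) = rfact_int (2 * l)" by (rule rfS0) (simp_all add: algebra_simps)
  show ?thesis unfolding H_def e0 e1 e2 e3 e4 e5 e6 e7 e8 t2_def B1_def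
    by (simp only: of_int_mult of_int_minus of_int_numeral) (rule t2_eq_abs)
qed

definition W :: "int \<Rightarrow> int \<Rightarrow> real" where
  "W q m = poch_int (-1/2) (m) * poch_int (-1/2) (m) * poch_int (1/2) (q - m) * poch_int (1/2) (q + 2 - m) * rfact_int (2 * q + 4 - 2 * m) * rfact_int (2 * m)"

definition w1 :: "int \<Rightarrow> int \<Rightarrow> int" where
  "w1 q l = (2 * l - 3) * (2 * l - 3) * (2 * q - 2 * l - 1) * (2 * q - 2 * l - 1) * (2 * q - 2 * l + 1) * (2 * q - 2 * l + 3) * (2 * q - 2 * l + 5) * (2 * q - 2 * l + 6) * 2 * 2"

lemma w1_eq_abs:
  fixes y0 y1 y2 y3 y4 y5 a0 a1 a2 a3 a4 a5 a6 a7 :: real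
  shows "((a0 / 2) * y0) * ((a1 / 2) * y1) * ((a2 / 2) * y2) * ((a3 / 2) * (a4 / 2) * (a5 / 2) * y3) * (a6 * a7 * y4) * y5 = (a0 * a1 * a2 * a3 * a4 * a5 * a6 * a7 * 2 * 2) / 256 * (y0 * y1 * y2 * y3 * y4 * y5)"
  by (simp add: field_simps)

lemma w1_eq:
  "W q (l + 1 - 1) = of_int (w1 q l) / 256 * B1 q l"
proof -
  have e0: "poch_int (-1/2) (l + 1 - 1) = (of_int (2 * l - 3) / 2) * poch_int (-1/2) (l - 1)" by (rule pmS1) (simp_all add: algebra_simps)
  have e1: "poch_int (-1/2) (l + 1 - 1) = (of_int (2 * l - 3) / 2) * poch_int (-1/2) (l - 1)" by (rule pmS1) (simp_all add: algebra_simps)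
  have e2: "poch_int (1/2) (q - (l + 1 - 1)) = (of_int (2 * q - 2 * l - 1) / 2) * poch_int (1/2) (q - l - 1)" by (rule ppS1) (simp_all add: algebra_simps)
  have e3: "poch_int (1/2) (q + 2 - (l + 1 - 1)) = (of_int (2 * q - 2 * l - 1) / 2) * (of_int (2 * q - 2 * l + 1) / 2) * (of_int (2 * q - 2 * l + 3) / 2) * poch_int (1/2) (q - l - 1)" by (rule ppS3) (simp_all add: algebra_simps)
  have e4: "rfact_int (2 * q + 4 - 2 * (l + 1 - 1)) = of_int (2 * q - 2 * l + 5) * of_int (2 * q - 2 * l + 6) * rfact_int (2 * q - 2 * l + 6)" by (rule rfS2) (simp_all add: algebra_simps)
  have e5: "rfact_int (2 * (l + 1 - 1)) = rfact_int (2 * l)" by (rule rfS0) (simp_all add: algebra_simps)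
  show ?thesis unfolding W_def e0 e1 e2 e3 e4 e5 w1_def B1_def
    by (simp only: of_int_mult of_int_minus of_int_numeral) (rule w1_eq_abs)
qed

definition w0 :: "int \<Rightarrow> int \<Rightarrow> int" where
  "w0 q l = (2 * q - 2 * l - 1) * (2 * q - 2 * l + 1) * (2 * q - 2 * l - 1) * (2 * q - 2 * l + 1) * (2 * q - 2 * l + 3) * (2 * q - 2 * l + 5) * (2 * l - 1) * (2 * l) * 2 * 2"

lemma w0_eq_abs:
  fixes y0 y1 y2 y3 y4 y5 a0 a1 a2 a3 a4 a5 a6 a7 :: real
  shows "y0 * y1 * ((a0 / 2) * (a1 / 2) * y2) * ((a2 / 2) * (a3 / 2) * (a4 / 2) * (a5 / 2) * y3) * y4 * (a6 * a7 * y5) = (a0 * a1 * a2 * a3 * a4 * a5 * a6 * a7 * 2 * 2) / 256 * (y0 * y1 * y2 * y3 * y4 * y5)"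
  by (simp add: field_simps)

lemma w0_eq:
  "W q (l - 1) = of_int (w0 q l) / 256 * B1 q l"
proof -
  have e0: "poch_int (1/2) (q - (l - 1)) = (of_int (2 * q - 2 * l - 1) / 2) * (of_int (2 * q - 2 * l + 1) / 2) * poch_int (1/2) (q - l - 1)" by (rule ppS2) (simp_all add: algebra_simps)
  have e1: "poch_int (1/2) (q + 2 - (l - 1)) = (of_int (2 * q - 2 * l - 1) / 2) * (of_int (2 * q - 2 * l + 1) / 2) * (of_int (2 * q - 2 * l + 3) / 2) * (of_int (2 * q - 2 * l + 5) / 2) * poch_int (1/2) (q - l - 1)" by (rule ppS4) (simp_all add: algebra_simps)
  have e2: "rfact_int (2 * q + 4 - 2 * (l - 1)) = rfact_int (2 * q - 2 * l + 6)" by (rule rfS0) (simp_all add: algebra_simps)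
  have e3: "rfact_int (2 * (l - 1)) = of_int (2 * l - 1) * of_int (2 * l) * rfact_int (2 * l)" by (rule rfS2) (simp_all add: algebra_simps)
  show ?thesis unfolding W_def e0 e1 e2 e3 w0_def B1_def
    by (simp only: of_int_mult of_int_minus of_int_numeral) (rule w0_eq_abs)
qed

definition P1I :: "int \<Rightarrow> int \<Rightarrow> int \<Rightarrow> int \<Rightarrow> int" where
  "P1I q k x y = (936 - 4080 * y + 1728 * y^2 + 14208 * y^3 - 21888 * y^4 + 8448 * y^5 - 720 * x + 2784 * x * y - 384 * x * y^2 - 9984 * x * y^3 + 13056 * x * y^4 - 4608 * x * y^5 - 5952 * k + 24128 * k * y - 4992 * k * y^2 - 86272 * k * y^3 + 115200 * k * y^4 - 40960 * k * y^5 + 5760 * k * x - 24192 * k * x * y - 256 * k * x * y^2 + 90624 * k * x * y^3 - 91136 * k * x * y^4 + 24576 * k * x * y^5 + 2304 * k * x^2 + 1536 * k * x^2 * y - 11264 * k * x^2 * y^2 - 6144 * k * x^2 * y^3 + 8192 * k * x^2 * y^4 - 1536 * k * x^3 + 1024 * k * x^3 * y + 6144 * k * x^3 * y^2 - 4096 * k * x^3 * y^3 + 12096 * k^2 - 42624 * k^2 * y + 768 * k^2 * y^2 + 153088 * k^2 * y^3 - 196608 * k^2 * y^4 + 69632 * k^2 * y^5 - 18816 * k^2 * x + 50944 * k^2 * x * y + 32768 * k^2 * x * y^2 - 192512 * k^2 * x * y^3 + 169984 * k^2 * x * y^4 - 45056 * k^2 * x * y^5 + 1920 * k^2 * x^2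 - 5888 * k^2 * x^2 * y - 4608 * k^2 * x^2 * y^2 + 23552 * k^2 * x^2 * y^3 - 12288 * k^2 * x^2 * y^4 + 768 * k^2 * x^3 - 512 * k^2 * x^3 * y - 3072 * k^2 * x^3 * y^2 + 2048 * k^2 * x^3 * y^3 - 5376 * k^3 + 24320 * k^3 * y - 10752 * k^3 * y^2 - 84992 * k^3 * y^3 + 129024 * k^3 * y^4 - 49152 * k^3 * y^5 + 13824 * k^3 * x - 35328 * k^3 * x * y - 25600 * k^3 * x * y^2 + 133120 * k^3 * x * y^3 - 118784 * k^3 * x * y^4 + 32768 * k^3 * x * y^5 - 1536 * k^3 * x^2 + 2560 * k^3 * x^2 * y + 5120 * k^3 * x^2 * y^2 - 10240 * k^3 * x^2 * y^3 + 4096 * k^3 * x^2 * y^4 - 2304 * k^4 + 14848 * k^4 * y^2 - 3072 * k^4 * y^3 - 22528 * k^4 * y^4 + 12288 * k^4 * y^5 - 3072 * k^4 * x + 8192 * k^4 * x * y + 5120 * k^4 * x * y^2 - 30720 * k^4 * x * y^3 + 28672 * k^4 * x * y^4 - 8192 * k^4 * x * y^5 + 1536 * k^5 - 2560 * k^5 * y - 5120 * k^5 * y^2 + 10240 * k^5 * y^3 - 4096 * k^5 * y^4 + 2310 * q - 244 * q * y - 33744 * q * y^2 + 72608 * q * y^3 - 49824 * q * y^4 + 8384 * q * y^5 + 1536 * q * y^6 - 2364 * q * x + 616 * q * x * y + 26080 * q * x * y^2 - 49984 * q * x * y^3 + 31808 * q * x * y^4 - 6528 * q * x * y^5 - 9312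 * q * k - 3344 * q * k * y + 186368 * q * k * y^2 - 397248 * q * k * y^3 + 258944 * q * k * y^4 - 40960 * q * k * y^5 - 5632 * q * k * y^6 + 2592 * q * k * x + 7776 * q * k * x * y - 168000 * q * k * x * y^2 + 327808 * q * k * x * y^3 - 192768 * q * k * x * y^4 + 30720 * q * k * x * y^5 + 12192 * q * k * x^2 + 13952 * q * k * x^2 * y - 38912 * q * k * x^2 * y^2 + 1536 * q * k * x^2 * y^3 + 9728 * q * k * x^2 * y^4 - 3840 * q * k * x^3 - 9728 * q * k * x^3 * y + 23552 * q * k * x^3 * y^2 - 10240 * q * k * x^3 * y^3 + 14928 * q * k^2 + 34400 * q * k^2 * y - 338880 * q * k^2 * y^2 + 627072 * q * k^2 * y^3 - 388096 * q * k^2 * y^4 + 62464 * q * k^2 * y^5 + 6144 * q * k^2 * y^6 - 17376 * q * k^2 * x - 89408 * q * k^2 * x * y + 428288 * q * k^2 * x * y^2 - 573952 * q * k^2 * x * y^3 + 285184 * q * k^2 * x * y^4 - 41984 * q * k^2 * x * y^5 - 6624 * q * k^2 * x^2 + 17472 * q * k^2 * x^2 * y - 19072 * q * k^2 * x^2 * y^2 + 16128 * q * k^2 * x^2 * y^3 - 6144 * q * k^2 * x^2 * y^4 + 2112 * q * k^2 * x^3 + 4736 * q * k^2 * x^3 * y - 12544 * q * k^2 * x^3 * y^2 + 5632 * q * k^2 * x^3 * y^3 + 864 * q * k^3 - 24768 * q * k^3 * y + 165120 * q * k^3 * y^2 - 322816 * q * k^3 * y^3 + 202752 * q * k^3 *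 y^4 - 32768 * q * k^3 * y^5 - 2048 * q * k^3 * y^6 + 10368 * q * k^3 * x + 82944 * q * k^3 * x * y - 304128 * q * k^3 * x * y^2 + 344064 * q * k^3 * x * y^3 - 145408 * q * k^3 * x * y^4 + 16384 * q * k^3 * x * y^5 + 384 * q * k^3 * x^2 - 12544 * q * k^3 * x^2 * y + 18944 * q * k^3 * x^2 * y^2 - 7168 * q * k^3 * x^2 * y^3 - 6336 * q * k^4 - 11904 * q * k^4 * y + 25344 * q * k^4 * y^2 + 17920 * q * k^4 * y^3 - 24576 * q * k^4 * y^4 + 4096 * q * k^4 * y^5 - 768 * q * k^4 * x - 22528 * q * k^4 * x * y + 67584 * q * k^4 * x * y^2 - 65536 * q * k^4 * x * y^3 + 20480 * q * k^4 * x * y^4 + 1152 * q * k^5 + 10752 * q * k^5 * y - 24576 * q * k^5 * y^2 + 14336 * q * k^5 * y^3 - 2048 * q * k^5 * y^4 - 1413 * q^2 + 29010 * q^2 * y - 89008 * q^2 * y^2 + 96496 * q^2 * y^3 - 33424 * q^2 * y^4 - 2272 * q^2 * y^5 + 1664 * q^2 * y^6 + 30 * q^2 * x - 24212 * q^2 * x * y + 71568 * q^2 * x * y^2 - 72288 * q^2 * x * y^3 + 28640 * q^2 * x * y^4 - 3392 * q^2 * x * y^5 + 15156 * q^2 * k - 152856 * q^2 * k * y + 458024 * q^2 * k * y^2 - 504032 * q^2 * k * y^3 + 183680 * q^2 * k * y^4 + 1536 * q^2 * k * y^5 - 4992 * q^2 * k * y^6 - 13536 * q^2 * k * x + 123744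 * q^2 * k * x * y - 364864 * q^2 * k * x * y^2 + 382336 * q^2 * k * x * y^3 - 146688 * q^2 * k * x * y^4 + 13312 * q^2 * k * x * y^5 - 10296 * q^2 * k * x^2 + 63360 * q^2 * k * x^2 * y - 64448 * q^2 * k * x^2 * y^2 + 12288 * q^2 * k * x^2 * y^3 + 3712 * q^2 * k * x^2 * y^4 + 8544 * q^2 * k * x^3 - 26432 * q^2 * k * x^3 * y + 24192 * q^2 * k * x^3 * y^2 - 6912 * q^2 * k * x^3 * y^3 - 576 * q^2 * k * x^4 - 768 * q^2 * k * x^4 * y + 768 * q^2 * k * x^4 * y^2 - 33696 * q^2 * k^2 + 281376 * q^2 * k^2 * y - 691008 * q^2 * k^2 * y^2 + 668736 * q^2 * k^2 * y^3 - 229632 * q^2 * k^2 * y^4 + 4864 * q^2 * k^2 * y^5 + 3072 * q^2 * k^2 * y^6 + 50496 * q^2 * k^2 * x - 353632 * q^2 * k^2 * x * y + 677184 * q^2 * k^2 * x * y^2 - 516224 * q^2 * k^2 * x * y^3 + 153344 * q^2 * k^2 * x * y^4 - 10240 * q^2 * k^2 * x * y^5 - 2064 * q^2 * k^2 * x^2 - 8800 * q^2 * k^2 * x^2 * y + 14656 * q^2 * k^2 * x^2 * y^2 - 5248 * q^2 * k^2 * x^2 * y^3 - 4128 * q^2 * k^2 * x^3 + 15808 * q^2 * k^2 * x^3 * y - 12160 * q^2 * k^2 * x^3 * y^2 + 2304 * q^2 * k^2 * x^3 * y^3 + 17112 * q^2 * k^3 - 102464 * q^2 * k^3 * y + 263264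 * q^2 * k^3 * y^2 - 256384 * q^2 * k^3 * y^3 + 83968 * q^2 * k^3 * y^4 - 2048 * q^2 * k^3 * y^5 - 42336 * q^2 * k^3 * x + 231936 * q^2 * k^3 * x * y - 363136 * q^2 * k^3 * x * y^2 + 214528 * q^2 * k^3 * x * y^3 - 41984 * q^2 * k^3 * x * y^4 + 3744 * q^2 * k^3 * x^2 - 10368 * q^2 * k^3 * x^2 * y + 5248 * q^2 * k^3 * x^2 * y^2 + 9696 * q^2 * k^4 - 44480 * q^2 * k^4 * y + 34176 * q^2 * k^4 * y^2 + 1792 * q^2 * k^4 * y^3 - 5120 * q^2 * k^4 * y^4 + 10560 * q^2 * k^4 * x - 40448 * q^2 * k^4 * x * y + 48384 * q^2 * k^4 * x * y^2 - 17408 * q^2 * k^4 * x * y^3 - 6432 * q^2 * k^5 + 19072 * q^2 * k^5 * y - 16000 * q^2 * k^5 * y^2 + 4096 * q^2 * k^5 * y^3 - 8091 * q^3 + 47436 * q^3 * y - 82820 * q^3 * y^2 + 49824 * q^3 * y^3 - 2768 * q^3 * y^4 - 4928 * q^3 * y^5 + 576 * q^3 * y^6 + 7896 * q^3 * x - 45680 * q^3 * x * y + 74176 * q^3 * x * y^2 - 48000 * q^3 * x * y^3 + 12160 * q^3 * x * y^4 - 768 * q^3 * x * y^5 + 37758 * q^3 * k - 215324 * q^3 * k * y + 403260 * q^3 * k * y^2 - 267104 * q^3 * k * y^3 + 41072 * q^3 * k * y^4 + 11136 * q^3 * k * y^5 - 1152 * q^3 * k * y^6 - 19920 * q^3 *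 k * x + 153704 * q^3 * k * x * y - 297616 * q^3 * k * x * y^2 + 205024 * q^3 * k * x * y^3 - 49088 * q^3 * k * x * y^4 + 2048 * q^3 * k * x * y^5 - 34116 * q^3 * k * x^2 + 76960 * q^3 * k * x^2 * y - 49728 * q^3 * k * x^2 * y^2 + 8192 * q^3 * k * x^2 * y^3 + 576 * q^3 * k * x^2 * y^4 + 9648 * q^3 * k * x^3 - 17376 * q^3 * k * x^3 * y + 9792 * q^3 * k * x^3 * y^2 - 1664 * q^3 * k * x^3 * y^3 + 816 * q^3 * k * x^4 - 1216 * q^3 * k * x^4 * y + 448 * q^3 * k * x^4 * y^2 - 67392 * q^3 * k^2 + 302928 * q^3 * k^2 * y - 478336 * q^3 * k^2 * y^2 + 280448 * q^3 * k^2 * y^3 - 44288 * q^3 * k^2 * y^4 - 4352 * q^3 * k^2 * y^5 + 89952 * q^3 * k^2 * x - 321328 * q^3 * k^2 * x * y + 391872 * q^3 * k^2 * x * y^2 - 185792 * q^3 * k^2 * x * y^3 + 27136 * q^3 * k^2 * x * y^4 + 10368 * q^3 * k^2 * x^2 - 30528 * q^3 * k^2 * x^2 * y + 22272 * q^3 * k^2 * x^2 * y^2 - 4352 * q^3 * k^2 * x^2 * y^3 - 5376 * q^3 * k^2 * x^3 + 8768 * q^3 * k^2 * x^3 * y - 3840 * q^3 * k^2 * x^3 * y^2 + 256 * q^3 * k^2 * x^3 * y^3 + 8868 * q^3 * k^3 - 56720 * q^3 * k^3 * y + 111632 * q^3 * k^3 * y^2 - 66432 * q^3 * k^3 * y^3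 + 9728 * q^3 * k^3 * y^4 - 55920 * q^3 * k^3 * x + 153920 * q^3 * k^3 * x * y - 133056 * q^3 * k^3 * x * y^2 + 36864 * q^3 * k^3 * x * y^3 + 2832 * q^3 * k^3 * x^2 - 2752 * q^3 * k^3 * x^2 * y + 576 * q^3 * k^3 * x^2 * y^2 + 19632 * q^3 * k^4 - 40832 * q^3 * k^4 * y + 21184 * q^3 * k^4 * y^2 - 1792 * q^3 * k^4 * y^3 + 6144 * q^3 * k^4 * x - 12544 * q^3 * k^4 * x * y + 5632 * q^3 * k^4 * x * y^2 - 3744 * q^3 * k^5 + 6144 * q^3 * k^5 * y - 2432 * q^3 * k^5 * y^2 - 9054 * q^4 + 31962 * q^4 * y - 34492 * q^4 * y^2 + 7632 * q^4 * y^3 + 5056 * q^4 * y^4 - 1760 * q^4 * y^5 + 64 * q^4 * y^6 + 11010 * q^4 * x - 35252 * q^4 * x * y + 37904 * q^4 * x * y^2 - 16416 * q^4 * x * y^3 + 2464 * q^4 * x * y^4 - 64 * q^4 * x * y^5 + 28434 * q^4 * k - 124772 * q^4 * k * y + 161804 * q^4 * k * y^2 - 61296 * q^4 * k * y^3 - 3728 * q^4 * k * y^4 + 2688 * q^4 * k * y^5 - 15288 * q^4 * k * x + 83752 * q^4 * k * x * y - 114368 * q^4 * k * x * y^2 + 53152 * q^4 * k * x * y^3 - 6400 * q^4 * k * x * y^4 - 22020 * q^4 * k * x^2 + 37552 * q^4 * k * x^2 * y - 17984 * q^4 * k * x^2 * y^2 + 1728 * q^4 * k * x^2 * y^3 +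 64 * q^4 * k * x^2 * y^4 + 2016 * q^4 * k * x^3 - 3360 * q^4 * k * x^3 * y + 1536 * q^4 * k * x^3 * y^2 - 128 * q^4 * k * x^3 * y^3 + 624 * q^4 * k * x^4 - 512 * q^4 * k * x^4 * y + 64 * q^4 * k * x^4 * y^2 - 39288 * q^4 * k^2 + 128288 * q^4 * k^2 * y - 137856 * q^4 * k^2 * y^2 + 48256 * q^4 * k^2 * y^3 - 1152 * q^4 * k^2 * y^4 + 51840 * q^4 * k^2 * x - 121584 * q^4 * k^2 * x * y + 91904 * q^4 * k^2 * x * y^2 - 22592 * q^4 * k^2 * x * y^3 + 8592 * q^4 * k^2 * x^2 - 14368 * q^4 * k^2 * x^2 * y + 6336 * q^4 * k^2 * x^2 * y^2 - 384 * q^4 * k^2 * x^2 * y^3 - 1824 * q^4 * k^2 * x^3 + 1792 * q^4 * k^2 * x^3 * y - 384 * q^4 * k^2 * x^3 * y^2 - 4956 * q^4 * k^3 - 2240 * q^4 * k^3 * y + 12144 * q^4 * k^3 * y^2 - 5632 * q^4 * k^3 * y^3 - 21504 * q^4 * k^3 * x + 34112 * q^4 * k^3 * x * y - 13184 * q^4 * k^3 * x * y^2 + 816 * q^4 * k^3 * x^2 - 640 * q^4 * k^3 * x^2 * y + 64 * q^4 * k^3 * x^2 * y^2 + 8880 * q^4 * k^4 - 11392 * q^4 * k^4 * y + 3648 * q^4 * k^4 * y^2 + 768 * q^4 * k^4 * x - 512 * q^4 * k^4 * x * y - 576 * q^4 * k^5 + 384 * q^4 * k^5 * y - 4572 * q^5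 + 10692 * q^5 * y - 5792 * q^5 * y^2 - 1888 * q^5 * y^3 + 1856 * q^5 * y^4 - 192 * q^5 * y^5 + 6204 * q^5 * x - 13568 * q^5 * x * y + 10080 * q^5 * x * y^2 - 2816 * q^5 * x * y^3 + 192 * q^5 * x * y^4 + 9612 * q^5 * k - 35160 * q^5 * k * y + 29872 * q^5 * k * y^2 - 4592 * q^5 * k * y^3 - 1696 * q^5 * k * y^4 - 6552 * q^5 * k * x + 22896 * q^5 * k * x * y - 20560 * q^5 * k * x * y^2 + 5568 * q^5 * k * x * y^3 - 64 * q^5 * k * x * y^4 - 5664 * q^5 * k * x^2 + 7760 * q^5 * k * x^2 * y - 2752 * q^5 * k * x^2 * y^2 + 64 * q^5 * k * x^2 * y^3 - 336 * q^5 * k * x^3 + 128 * q^5 * k * x^3 * y + 64 * q^5 * k * x^3 * y^2 + 96 * q^5 * k * x^4 - 64 * q^5 * k * x^4 * y - 8184 * q^5 * k^2 + 22448 * q^5 * k^2 * y - 16032 * q^5 * k^2 * y^2 + 3136 * q^5 * k^2 * y^3 + 12192 * q^5 * k^2 * x - 17728 * q^5 * k^2 * x * y + 6208 * q^5 * k^2 * x * y^2 + 128 * q^5 * k^2 * x * y^3 + 2304 * q^5 * k^2 * x^2 - 2304 * q^5 * k^2 * x^2 * y + 512 * q^5 * k^2 * x^2 * y^2 - 192 * q^5 * k^2 * x^3 + 128 * q^5 * k^2 * x^3 * y - 3936 * q^5 * k^3 + 3248 * q^5 * k^3 * y - 416 * q^5 * k^3 * y^2 - 2832 * q^5 * k^3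 * x + 1984 * q^5 * k^3 * x * y - 64 * q^5 * k^3 * x * y^2 + 96 * q^5 * k^3 * x^2 - 64 * q^5 * k^3 * x^2 * y + 1248 * q^5 * k^4 - 832 * q^5 * k^4 * y - 1080 * q^6 + 1752 * q^6 * y - 16 * q^6 * y^2 - 736 * q^6 * y^3 + 192 * q^6 * y^4 + 1560 * q^6 * x - 2576 * q^6 * x * y + 1312 * q^6 * x * y^2 - 192 * q^6 * x * y^3 + 1368 * q^6 * k - 4656 * q^6 * k * y + 2448 * q^6 * k * y^2 + 32 * q^6 * k * y^3 - 1344 * q^6 * k * x + 2720 * q^6 * k * x * y - 1312 * q^6 * k * x * y^2 + 64 * q^6 * k * x * y^3 - 528 * q^6 * k * x^2 + 544 * q^6 * k * x^2 * y - 128 * q^6 * k * x^2 * y^2 - 96 * q^6 * k * x^3 + 64 * q^6 * k * x^3 * y - 96 * q^6 * k^2 + 1024 * q^6 * k^2 * y - 640 * q^6 * k^2 * y^2 + 960 * q^6 * k^2 * x - 448 * q^6 * k^2 * x * y - 128 * q^6 * k^2 * x * y^2 + 192 * q^6 * k^2 * x^2 - 128 * q^6 * k^2 * x^2 * y - 624 * q^6 * k^3 + 416 * q^6 * k^3 * y - 96 * q^6 * k^3 * x + 64 * q^6 * k^3 * x * y - 96 * q^7 + 112 * q^7 * y + 64 * q^7 * y^2 - 64 * q^7 * y^3 + 144 * q^7 * x - 192 * q^7 * x * y + 64 * q^7 * x * y^2 + 48 * q^7 * k - 224 * q^7 * k * y + 128 * q^7 * k * y^2 - 96 * q^7 * k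 * x + 64 * q^7 * k * x * y + 96 * q^7 * k^2 - 64 * q^7 * k^2 * y)"

definition P2I :: "int \<Rightarrow> int \<Rightarrow> int \<Rightarrow> int \<Rightarrow> int" where
  "P2I q k x y = (8424 - 53136 * y + 127872 * y^2 - 149376 * y^3 + 90240 * y^4 - 26880 * y^5 + 3072 * y^6 - 6480 * x + 38880 * x * y - 86400 * x * y^2 + 88320 * x * y^3 - 42240 * x * y^4 + 7680 * x * y^5 - 49248 * k + 275904 * k * y - 596544 * k * y^2 + 640256 * k * y^3 - 361984 * k * y^4 + 102400 * k * y^5 - 11264 * k * y^6 + 38880 * k * x - 208512 * k * x * y + 420864 * k * x * y^2 - 402944 * k * x * y^3 + 184832 * k * x * y^4 - 32768 * k * x * y^5 + 105120 * k^2 - 524352 * k^2 * y + 994432 * k^2 * y^2 - 940288 * k^2 * y^3 + 473088 * k^2 * y^4 - 120832 * k^2 * y^5 + 12288 * k^2 * y^6 - 83520 * k^2 * x + 409728 * k^2 * x * y - 752896 * k^2 * x * y^2 + 667136 * k^2 * x * y^3 - 288768 * k^2 * x * y^4 + 49152 * k^2 * x * y^5 - 100800 * k^3 + 454656 * k^3 * y - 748288 * k^3 * y^2 + 593920 * k^3 * y^3 - 242688 * k^3 * y^4 + 49152 * k^3 * y^5 - 4096 * k^3 * y^6 + 74880 * k^3 * x - 348672 * k^3 * x * y + 600064 * k^3 * x * y^2 - 497664 * k^3 * x * y^3 + 202752 * k^3 * x * y^4 - 32768 * k^3 * x * y^5 + 43776 * k^4 - 182784 * k^4 * y + 263680 *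 k^4 * y^2 - 168960 * k^4 * y^3 + 47104 * k^4 * y^4 - 4096 * k^4 * y^5 - 23040 * k^4 * x + 104448 * k^4 * x * y - 173056 * k^4 * x * y^2 + 137216 * k^4 * x * y^3 - 53248 * k^4 * x * y^4 + 8192 * k^4 * x * y^5 - 6912 * k^5 + 27648 * k^5 * y - 36864 * k^5 * y^2 + 20480 * k^5 * y^3 - 4096 * k^5 * y^4 + 51030 * q - 248652 * q * y + 450624 * q * y^2 - 391840 * q * y^3 + 169952 * q * y^4 - 32960 * q * y^5 + 1792 * q * y^6 - 38556 * q * x + 176616 * q * x * y - 291360 * q * x * y^2 + 220864 * q * x * y^3 - 77248 * q * x * y^4 + 9856 * q * x * y^5 - 257400 * q * k + 1122576 * q * k * y - 1862064 * q * k * y^2 + 1502144 * q * k * y^3 - 605568 * q * k * y^4 + 106496 * q * k * y^5 - 4352 * q * k * y^6 + 198216 * q * k * x - 821472 * q * k * x * y + 1264896 * q * k * x * y^2 - 911488 * q * k * x * y^3 + 305024 * q * k * x * y^4 - 36864 * q * k * x * y^5 + 468120 * q * k^2 - 1778288 * q * k^2 * y + 2584800 * q * k^2 * y^2 - 1821888 * q * k^2 * y^3 + 628480 * q * k^2 * y^4 - 85504 * q * k^2 * y^5 - 357744 * q * k^2 * x + 1336928 * q * k^2 * x * y - 1899840 * q * k^2 * x * y^2 + 1276032 * q * k^2 * x * y^3 - 396288 * q * k^2 * x * y^4 + 43008 * q * k^2 * x * y^5 - 376464 * q * k^3 + 1231232 * q * k^3 * y - 1526720 * q * k^3 * y^2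 + 897024 * q * k^3 * y^3 - 245248 * q * k^3 * y^4 + 20480 * q * k^3 * y^5 + 2048 * q * k^3 * y^6 + 263136 * q * k^3 * x - 886784 * q * k^3 * x * y + 1147776 * q * k^3 * x * y^2 - 699392 * q * k^3 * x * y^3 + 191488 * q * k^3 * x * y^4 - 16384 * q * k^3 * x * y^5 + 130368 * q * k^4 - 356096 * q * k^4 * y + 359168 * q * k^4 * y^2 - 165888 * q * k^4 * y^3 + 36864 * q * k^4 * y^4 - 4096 * q * k^4 * y^5 - 64128 * q * k^4 * x + 190208 * q * k^4 * x * y - 213504 * q * k^4 * x * y^2 + 107520 * q * k^4 * x * y^3 - 20480 * q * k^4 * x * y^4 - 14400 * q * k^5 + 27648 * q * k^5 * y - 13568 * q * k^5 * y^2 - 2048 * q * k^5 * y^3 + 2048 * q * k^5 * y^4 + 116811 * q^2 - 431130 * q^2 * y + 591496 * q^2 * y^2 - 377392 * q^2 * y^3 + 108976 * q^2 * y^4 - 9632 * q^2 * y^5 - 512 * q^2 * y^6 - 85842 * q^2 * x + 295068 * q^2 * x * y - 371056 * q^2 * x * y^2 + 213280 * q^2 * x * y^3 - 54560 * q^2 * x * y^4 + 4544 * q^2 * x * y^5 - 505920 * q^2 * k + 1706408 * q^2 * k * y - 2168360 * q^2 * k * y^2 + 1276320 * q^2 * k * y^3 - 327680 * q^2 * k * y^4 + 19200 * q^2 * k * y^5 + 2688 * q^2 * k * y^6 + 373908 * q^2 * k * x - 1197776 * q^2 * k * x * y + 1433408 * q^2 * k * x * y^2 - 786624 * q^2 *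 k * x * y^3 + 189888 * q^2 * k * x * y^4 - 14336 * q^2 * k * x * y^5 + 745884 * q^2 * k^2 - 2203608 * q^2 * k^2 * y + 2457712 * q^2 * k^2 * y^2 - 1248736 * q^2 * k^2 * y^3 + 255360 * q^2 * k^2 * y^4 - 1792 * q^2 * k^2 * y^5 - 3072 * q^2 * k^2 * y^6 - 536568 * q^2 * k^2 * x + 1576816 * q^2 * k^2 * x * y - 1738656 * q^2 * k^2 * x * y^2 + 866880 * q^2 * k^2 * x * y^3 - 181760 * q^2 * k^2 * x * y^4 + 10240 * q^2 * k^2 * x * y^5 - 448584 * q^2 * k^3 + 1131904 * q^2 * k^3 * y - 1069024 * q^2 * k^3 * y^2 + 457728 * q^2 * k^3 * y^3 - 79872 * q^2 * k^3 * y^4 + 2048 * q^2 * k^3 * y^5 + 284592 * q^2 * k^3 * x - 749312 * q^2 * k^3 * x * y + 722496 * q^2 * k^3 * x * y^2 - 295936 * q^2 * k^3 * x * y^3 + 41984 * q^2 * k^3 * x * y^4 + 91872 * q^2 * k^4 - 179520 * q^2 * k^4 * y + 122240 * q^2 * k^4 * y^2 - 36608 * q^2 * k^4 * y^3 + 5120 * q^2 * k^4 * y^4 - 40704 * q^2 * k^4 * x + 90880 * q^2 * k^4 * x * y - 68608 * q^2 * k^4 * x * y^2 + 17408 * q^2 * k^4 * x * y^3 + 288 * q^2 * k^5 - 7680 * q^2 * k^5 * y + 11136 * q^2 * k^5 * y^2 - 4096 * q^2 * k^5 * y^3 + 129753 * q^3 - 367080 * q^3 * y + 377564 * q^3 *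 y^2 - 165312 * q^3 * y^3 + 22896 * q^3 * y^4 + 2432 * q^3 * y^5 - 448 * q^3 * y^6 - 91368 * q^3 * x + 243000 * q^3 * x * y - 237888 * q^3 * x * y^2 + 103488 * q^3 * x * y^3 - 18560 * q^3 * x * y^4 + 896 * q^3 * x * y^5 - 484098 * q^3 * k + 1276816 * q^3 * k * y - 1220984 * q^3 * k * y^2 + 483552 * q^3 * k * y^3 - 50208 * q^3 * k * y^4 - 9856 * q^3 * k * y^5 + 1152 * q^3 * k * y^6 + 336144 * q^3 * k * x - 859376 * q^3 * k * x * y + 806176 * q^3 * k * x * y^2 - 330560 * q^3 * k * x * y^3 + 53376 * q^3 * k * x * y^4 - 2048 * q^3 * k * x * y^5 + 554424 * q^3 * k^2 - 1302256 * q^3 * k^2 * y + 1102432 * q^3 * k^2 * y^2 - 380544 * q^3 * k^2 * y^3 + 33536 * q^3 * k^2 * y^4 + 4352 * q^3 * k^2 * y^5 - 368352 * q^3 * k^2 * x + 867936 * q^3 * k^2 * x * y - 726528 * q^3 * k^2 * x * y^2 + 248448 * q^3 * k^2 * x * y^3 - 27136 * q^3 * k^2 * x * y^4 - 216048 * q^3 * k^3 + 432608 * q^3 * k^3 * y - 311808 * q^3 * k^3 * y^2 + 94208 * q^3 * k^3 * y^3 - 9728 * q^3 * k^3 * y^4 + 127872 * q^3 * k^3 * x - 259392 * q^3 * k^3 * x * y + 171392 * q^3 * k^3 * x * y^2 - 36864 * q^3 * k^3 * x * y^3 + 9552 * q^3 * k^4 - 4160 * q^3 * k^4 * y - 4160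 * q^3 * k^4 * y^2 + 1792 * q^3 * k^4 * y^3 - 9600 * q^3 * k^4 * x + 14848 * q^3 * k^4 * x * y - 5632 * q^3 * k^4 * x * y^2 + 3168 * q^3 * k^5 - 5760 * q^3 * k^5 * y + 2432 * q^3 * k^5 * y^2 + 77310 * q^4 - 168294 * q^4 * y + 123868 * q^4 * y^2 - 29296 * q^4 * y^3 - 3136 * q^4 * y^4 + 1568 * q^4 * y^5 - 64 * q^4 * y^6 - 51318 * q^4 * x + 109428 * q^4 * x * y - 83888 * q^4 * x * y^2 + 26912 * q^4 * x * y^3 - 3040 * q^4 * x * y^4 + 64 * q^4 * x * y^5 - 247746 * q^4 * k + 513152 * q^4 * k * y - 354176 * q^4 * k * y^2 + 76320 * q^4 * k * y^3 + 7456 * q^4 * k * y^4 - 2688 * q^4 * k * y^5 + 159516 * q^4 * k * x - 331824 * q^4 * k * x * y + 239744 * q^4 * k * x * y^2 - 68160 * q^4 * k * x * y^3 + 5696 * q^4 * k * x * y^4 + 205740 * q^4 * k^2 - 389448 * q^4 * k^2 * y + 247728 * q^4 * k^2 * y^2 - 54752 * q^4 * k^2 * y^3 + 1152 * q^4 * k^2 * y^4 - 126216 * q^4 * k^2 * x + 231888 * q^4 * k^2 * x * y - 135648 * q^4 * k^2 * x * y^2 + 24768 * q^4 * k^2 * x * y^3 - 35880 * q^4 * k^3 + 56128 * q^4 * k^3 * y - 29920 * q^4 * k^3 * y^2 + 5632 * q^4 * k^3 * y^3 + 25296 * q^4 * k^3 * x - 35584 * q^4 * k^3 * x * y + 12480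 * q^4 * k^3 * x * y^2 - 6480 * q^4 * k^4 + 9792 * q^4 * k^4 * y - 3648 * q^4 * k^4 * y^2 - 768 * q^4 * k^4 * x + 512 * q^4 * k^4 * x * y + 576 * q^4 * k^5 - 384 * q^4 * k^5 * y + 25236 * q^5 - 41748 * q^5 * y + 19136 * q^5 * y^2 + 672 * q^5 * y^3 - 1856 * q^5 * y^4 + 192 * q^5 * y^5 - 15516 * q^5 * x + 27456 * q^5 * x * y - 16352 * q^5 * x * y^2 + 3584 * q^5 * x * y^3 - 192 * q^5 * x * y^4 - 68676 * q^5 * k + 111352 * q^5 * k * y - 52016 * q^5 * k * y^2 + 2848 * q^5 * k * y^3 + 1792 * q^5 * k * y^4 + 41064 * q^5 * k * x - 68272 * q^5 * k * x * y + 35424 * q^5 * k * x * y^2 - 5440 * q^5 * k * x * y^3 + 35736 * q^5 * k^2 - 54976 * q^5 * k^2 * y + 25760 * q^5 * k^2 * y^2 - 3328 * q^5 * k^2 * y^3 - 20976 * q^5 * k^2 * x + 27136 * q^5 * k^2 * x * y - 8768 * q^5 * k^2 * x * y^2 + 1968 * q^5 * k^3 - 2080 * q^5 * k^3 * y + 512 * q^5 * k^3 * y^2 + 1824 * q^5 * k^3 * x - 1216 * q^5 * k^3 * x * y - 1248 * q^5 * k^4 + 832 * q^5 * k^4 * y + 4248 * q^6 - 5160 * q^6 * y + 784 * q^6 * y^2 + 800 * q^6 * y^3 - 192 * q^6 * y^4 - 2376 * q^6 * x + 3600 * q^6 * x * y - 1632 * q^6 * x * y^2 + 192 * q^6 *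 x * y^3 - 9624 * q^6 * k + 12224 * q^6 * k * y - 3680 * q^6 * k * y^2 - 128 * q^6 * k * y^3 + 5424 * q^6 * k * x - 6592 * q^6 * k * x * y + 1984 * q^6 * k * x * y^2 + 1872 * q^6 * k^2 - 2496 * q^6 * k^2 * y + 832 * q^6 * k^2 * y^2 - 1344 * q^6 * k^2 * x + 896 * q^6 * k^2 * x * y + 768 * q^6 * k^3 - 512 * q^6 * k^3 * y + 288 * q^7 - 240 * q^7 * y - 64 * q^7 * y^2 + 64 * q^7 * y^3 - 144 * q^7 * x + 192 * q^7 * x * y - 64 * q^7 * x * y^2 - 528 * q^7 * k + 544 * q^7 * k * y - 128 * q^7 * k * y^2 + 288 * q^7 * k * x - 192 * q^7 * k * x * y - 96 * q^7 * k^2 + 64 * q^7 * k^2 * y)"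

definition DenI :: "int \<Rightarrow> int \<Rightarrow> int" where
  "DenI q k = k * (q + 2) * (q + 3) * (q + 4) * (k - q - 2) * (2 * k - 2 * q - 3)"

lemma cert_int:
  fixes q k l1 l2 :: int
  shows "64 * q ^ 2 * k * (q + 2) * (q + 3) * (q + 4) * hq q k l1 l2
    + 128 * (4 * k * q - 4 * q ^ 2 + 2 * k - 7 * q - 4) * k * (q + 2) * (q + 3) * (q + 4) * hq1 q k l1 l2
    + 512 * DenI q k * hq2 q k l1 l2
    = ee1s q k l1 l2 * P1I q k (l1 + 1) l2 - ee1 q k l1 l2 * P1I q k l1 l2
      + (ee2s q k l1 l2 * P2I q k l1 (l2 + 1) - ee2 q k l1 l2 * P2I q k l1 l2)"
  unfolding hq_def hq1_def hq2_def ee1_def ee1s_def ee2_def ee2s_def P1I_def P2I_def DenI_def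
  by algebra

definition MI :: "int \<Rightarrow> int \<Rightarrow> int" where
  "MI q m = 2 - 9 * m + 12 * m ^ 2 - 4 * m ^ 3 + q - 4 * q * m + 4 * q * m ^ 2"

lemma cert0_int:
  fixes q l :: int
  shows "q ^ 2 * t0 q l + 2 * (- 4 * q ^ 2 - 7 * q - 4) * t1 q l + 8 * ((2 * q + 3) * (q + 2)) * t2 q l
    = 2 * MI q (l + 1 - 1) * w1 q l - 2 * MI q (l - 1) * w0 q l"
  unfolding t0_def t1_def t2_def w1_def w0_def MI_def
  by algebra

lemma final_alg:
  fixes q k D X0 X1 X2 Y1s Y1 Y2s Y2 Z1s Z1 Z2s Z2 B :: real
  assumes D: "D = k * (q + 2) * (q + 3) * (q + 4) * (k - q - 2) * (2 * k - 2 * q - 3)"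
    and nz: "D \<noteq> 0"
    and c: "64 * q ^ 2 * k * (q + 2) * (q + 3) * (q + 4) * X0
    + 128 * (4 * k * q - 4 * q ^ 2 + 2 * k - 7 * q - 4) * k * (q + 2) * (q + 3) * (q + 4) * X1
    + 512 * D * X2
    = Y1s * Z1s - Y1 * Z1 + (Y2s * Z2s - Y2 * Z2)"
  shows "q ^ 2 / (8 * (2 * k - 2 * q - 3) * (k - q - 2)) * (X0 / 256 * B)
     + (4 * k * q - 4 * q ^ 2 + 2 * k - 7 * q - 4) / (4 * (2 * k - 2 * q - 3) * (k - q - 2)) * (X1 / 256 * B)
     + X2 / 256 * B
   = Z1s / (512 * D) * (Y1s / 256 * B) - Z1 / (512 * D) * (Y1 / 256 * B)
     + (Z2s / (512 * D) * (Y2s / 256 * B) - Z2 / (512 * D) * (Y2 / 256 * B))"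
proof -
  define a where "a = 2 * k - 2 * q - 3"
  define b where "b = k - q - 2"
  define kq where "kq = k * (q + 2) * (q + 3) * (q + 4)"
  have D': "D = kq * b * a" unfolding D a_def b_def kq_def by (simp add: algebra_simps)
  have a0: "a \<noteq> 0" and b0: "b \<noteq> 0" and kq0: "kq \<noteq> 0" using nz D' by auto
  have c': "64 * q ^ 2 * kq * X0 + 128 * (4 * k * q - 4 * q ^ 2 + 2 * k - 7 * q - 4) * kq * X1 + 512 * D * X2
      = Y1s * Z1s - Y1 * Z1 + (Y2s * Z2s - Y2 * Z2)" using c unfolding kq_def by (simp add: algebra_simps)
  have "q ^ 2 / (8 * a * b) * (X0 / 256 * B)
     + (4 * k * q - 4 * q ^ 2 + 2 * k - 7 * q - 4) / (4 * a * b) * (X1 / 256 * B)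
     + X2 / 256 * B
     = (64 * q ^ 2 * kq * X0 + 128 * (4 * k * q - 4 * q ^ 2 + 2 * k - 7 * q - 4) * kq * X1 + 512 * D * X2) * B / (512 * 256 * D)"
    using a0 b0 kq0 unfolding D' by (simp add: field_simps)
  also have "\<dots> = (Y1s * Z1s - Y1 * Z1 + (Y2s * Z2s - Y2 * Z2)) * B / (512 * 256 * D)" unfolding c' ..
  also have "\<dots> = Z1s / (512 * D) * (Y1s / 256 * B) - Z1 / (512 * D) * (Y1 / 256 * B)
     + (Z2s / (512 * D) * (Y2s / 256 * B) - Z2 / (512 * D) * (Y2 / 256 * B))"
    using nz by (simp add: field_simps)
  finally show ?thesis unfolding a_def b_def .
qed

lemma final_alg0:
  fixes q kk c X0 X1 X2 M1 M0 W1 W0 B :: real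
  assumes kk: "kk = 0" and cc: "c = (2 * q + 3) * (q + 2)" and nz: "c \<noteq> 0"
    and cert: "q ^ 2 * X0 + 2 * (- 4 * q ^ 2 - 7 * q - 4) * X1 + 8 * c * X2 = 2 * M1 * W1 - 2 * M0 * W0"
  shows "q ^ 2 / (8 * (2 * kk - 2 * q - 3) * (kk - q - 2)) * (X0 / 256 * B)
     + (4 * kk * q - 4 * q ^ 2 + 2 * kk - 7 * q - 4) / (4 * (2 * kk - 2 * q - 3) * (kk - q - 2)) * (X1 / 256 * B)
     + X2 / 256 * B
   = M1 / (4 * c) * (W1 / 256 * B) - M0 / (4 * c) * (W0 / 256 * B)"
proof -
  have e1: "8 * (2 * kk - 2 * q - 3) * (kk - q - 2) = 8 * c" unfolding kk cc by (simp add: algebra_simps)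
  have e2: "4 * (2 * kk - 2 * q - 3) * (kk - q - 2) = 4 * c" unfolding kk cc by (simp add: algebra_simps)
  have e3: "4 * kk * q - 4 * q ^ 2 + 2 * kk - 7 * q - 4 = - 4 * q ^ 2 - 7 * q - 4" unfolding kk by simp
  have "q ^ 2 / (8 * c) * (X0 / 256 * B) + (- 4 * q ^ 2 - 7 * q - 4) / (4 * c) * (X1 / 256 * B) + X2 / 256 * B
      = (q ^ 2 * X0 + 2 * (- 4 * q ^ 2 - 7 * q - 4) * X1 + 8 * c * X2) * B / (8 * 256 * c)"
    using nz by (simp add: field_simps)
  also have "\<dots> = (2 * M1 * W1 - 2 * M0 * W0) * B / (8 * 256 * c)" unfolding cert ..
  also have "\<dots> = M1 / (4 * c) * (W1 / 256 * B) - M0 / (4 * c) * (W0 / 256 * B)"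
    using nz by (simp add: field_simps)
  finally show ?thesis unfolding e1 e2 e3 .
qed

definition G1 :: "int \<Rightarrow> int \<Rightarrow> int \<Rightarrow> int \<Rightarrow> real" where
  "G1 q k l1 l2 = of_int (P1I q k l1 l2) / (512 * of_int (DenI q k)) * E1 q k l1 l2"

definition G2 :: "int \<Rightarrow> int \<Rightarrow> int \<Rightarrow> int \<Rightarrow> real" where
  "G2 q k l1 l2 = of_int (P2I q k l1 l2) / (512 * of_int (DenI q k)) * E2 q k l1 l2"

lemma pw2:
  fixes q k l1 l2 :: int
  assumes "q \<ge> 1" "k \<ge> 1" "k \<noteq> q + 2"
  shows "(of_int q)^2 / (8 * (2 * of_int k - 2 * of_int q - 3) * (of_int k - of_int q - 2)) * H q l1 l2 k
       + (4 * of_int k * of_int q - 4 * (of_int q)^2 + 2 * of_int k - 7 * of_int q - 4)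
           / (4 * (2 * of_int k - 2 * of_int q - 3) * (of_int k - of_int q - 2)) * H (q + 1) l1 l2 k
       + H (q + 2) l1 l2 k
     = (G1 q k (l1 + 1) l2 - G1 q k l1 l2) + (G2 q k l1 (l2 + 1) - G2 q k l1 l2)"
proof -
  have c: "of_int (64 * q ^ 2 * k * (q + 2) * (q + 3) * (q + 4) * hq q k l1 l2
    + 128 * (4 * k * q - 4 * q ^ 2 + 2 * k - 7 * q - 4) * k * (q + 2) * (q + 3) * (q + 4) * hq1 q k l1 l2
    + 512 * DenI q k * hq2 q k l1 l2)
    = (of_int (ee1s q k l1 l2 * P1I q k (l1 + 1) l2 - ee1 q k l1 l2 * P1I q k l1 l2
      + (ee2s q k l1 l2 * P2I q k l1 (l2 + 1) - ee2 q k l1 l2 * P2I q k l1 l2)) :: real)"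
    using cert_int[of q k l1 l2] by (rule arg_cong)
  have c': "64 * (of_int q :: real) ^ 2 * of_int k * (of_int q + 2) * (of_int q + 3) * (of_int q + 4) * of_int (hq q k l1 l2)
    + 128 * (4 * of_int k * of_int q - 4 * (of_int q) ^ 2 + 2 * of_int k - 7 * of_int q - 4) * of_int k * (of_int q + 2) * (of_int q + 3) * (of_int q + 4) * of_int (hq1 q k l1 l2)
    + 512 * of_int (DenI q k) * of_int (hq2 q k l1 l2)
    = of_int (ee1s q k l1 l2) * of_int (P1I q k (l1 + 1) l2) - of_int (ee1 q k l1 l2) * of_int (P1I q k l1 l2)
      + (of_int (ee2s q k l1 l2) * of_int (P2I q k l1 (l2 + 1)) - of_int (ee2 q k l1 l2) * of_int (P2I q k l1 l2))"
    using c by (simp only: of_int_add of_int_diff of_int_mult of_int_power of_int_numeral)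
  have D: "(of_int (DenI q k) :: real) = of_int k * (of_int q + 2) * (of_int q + 3) * (of_int q + 4) * (of_int k - of_int q - 2) * (2 * of_int k - 2 * of_int q - 3)"
    unfolding DenI_def by simp
  have nzI: "DenI q k \<noteq> 0"
  proof -
    have "2 * k - 2 * q - 3 \<noteq> 0" by presburger
    moreover have "k - q - 2 \<noteq> 0" using assms by simp
    ultimately show ?thesis unfolding DenI_def using assms by simp
  qed
  hence nz: "(of_int (DenI q k) :: real) \<noteq> 0" by simp
  show ?thesis
    unfolding G1_def G2_def Hq1_eq[of q l1 l2 k] Hq2_eq[of q l1 l2 k]
    unfolding Hq_eq[of q l1 l2 k] E1s_eq[of q k l1 l2] E2s_eq[of q k l1 l2]
    unfolding E1_eq[of q k l1 l2] E2_eq[of q k l1 l2]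
    by (rule final_alg[OF D nz c'])
qed

definition Z :: "int \<Rightarrow> int \<Rightarrow> real" where
  "Z q m = of_int (MI q m) / (4 * ((2 * of_int q + 3) * (of_int q + 2))) * W q m"

definition G0 :: "int \<Rightarrow> int \<times> int \<Rightarrow> real" where
  "G0 q p = (if fst p = snd p then Z q (fst p - 1) else 0)"

lemma pw0_diag:
  fixes q k l :: int
  assumes "q \<ge> 1" "k = 0"
  shows "(of_int q)^2 / (8 * (2 * of_int k - 2 * of_int q - 3) * (of_int k - of_int q - 2)) * H q l l k
       + (4 * of_int k * of_int q - 4 * (of_int q)^2 + 2 * of_int k - 7 * of_int q - 4)
           / (4 * (2 * of_int k - 2 * of_int q - 3) * (of_int k - of_int q - 2)) * H (q + 1) l l k
       + H (q + 2) l l k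
     = Z q (l + 1 - 1) - Z q (l - 1)"
proof -
  have c: "of_int (q ^ 2 * t0 q l + 2 * (- 4 * q ^ 2 - 7 * q - 4) * t1 q l + 8 * ((2 * q + 3) * (q + 2)) * t2 q l)
    = (of_int (2 * MI q (l + 1 - 1) * w1 q l - 2 * MI q (l - 1) * w0 q l) :: real)"
    using cert0_int[of q l] by (rule arg_cong)
  have c': "(of_int q :: real) ^ 2 * of_int (t0 q l) + 2 * (- 4 * (of_int q) ^ 2 - 7 * of_int q - 4) * of_int (t1 q l)
      + 8 * ((2 * of_int q + 3) * (of_int q + 2)) * of_int (t2 q l)
    = 2 * of_int (MI q (l + 1 - 1)) * of_int (w1 q l) - 2 * of_int (MI q (l - 1)) * of_int (w0 q l)"
    using c by (simp only: of_int_add of_int_diff of_int_mult of_int_power of_int_numeral of_int_minus)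
  have cc: "((2 * of_int q + 3) * (of_int q + 2) :: real) = (2 * of_int q + 3) * (of_int q + 2)" by simp
  have nz: "((2 * of_int q + 3) * (of_int q + 2) :: real) \<noteq> 0" using assms by simp
  have kk: "(of_int k :: real) = 0" using assms by simp
  show ?thesis
    unfolding Z_def w1_eq[of q l] w0_eq[of q l] assms(2)
    unfolding t1_eq[of q l] t2_eq[of q l]
    unfolding t0_eq[of q l]
    by (rule final_alg0[OF _ cc nz c']) simp
qed


lemma fin_supp:
  fixes f :: "int \<times> int \<Rightarrow> real" and ca cb cc cd :: int
  assumes h: "\<And>a b. f (a, b) \<noteq> 0 \<Longrightarrow> 0 \<le> ca - a - b \<and> 0 \<le> cb + a + b \<and> 0 \<le> cc - a + b \<and> 0 \<le> cd + a - b"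
  shows "finite {p. f p \<noteq> 0}"
proof -
  define M where "M = \<bar>ca\<bar> + \<bar>cb\<bar> + \<bar>cc\<bar> + \<bar>cd\<bar>"
  have "{p. f p \<noteq> 0} \<subseteq> {-M..M} \<times> {-M..M}"
  proof clarify
    fix a b assume "f (a, b) \<noteq> 0"
    from h[OF this] show "a \<in> {-M..M} \<and> b \<in> {-M..M}" unfolding M_def by auto
  qed
  thus ?thesis by (rule finite_subset) simp
qed

lemma fin_summable:
  fixes f :: "int \<times> int \<Rightarrow> real"
  assumes "finite {p. f p \<noteq> 0}"
  shows "f summable_on UNIV"
proof -
  have "f summable_on {p. f p \<noteq> 0}" using assms by simp
  moreover have "f summable_on {p. f p \<noteq> 0} \<longleftrightarrow> f summable_on UNIV"
    by (rule summable_on_cong_neutral) auto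
  ultimately show ?thesis by simp
qed

lemma tele:
  fixes g :: "int \<times> int \<Rightarrow> real" and s :: "int \<times> int \<Rightarrow> int \<times> int"
  assumes fin: "finite {p. g p \<noteq> 0}" and b: "bij s"
  shows "(\<lambda>p. g (s p) - g p) summable_on UNIV" "infsum (\<lambda>p. g (s p) - g p) UNIV = 0"
proof -
  have bb: "bij_betw s UNIV UNIV" using b by (simp add: bij_def bij_betw_def)
  have sg: "g summable_on UNIV" using fin by (rule fin_summable)
  have sgs: "(\<lambda>p. g (s p)) summable_on UNIV" using summable_on_reindex_bij_betw[OF bb, of g] sg by simp
  have sgm: "(\<lambda>p. - g p) summable_on UNIV" using sg summable_on_uminus by blast
  have eq: "(\<lambda>p. g (s p) - g p) = (\<lambda>p. g (s p) + (- g p))" by simp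
  show "(\<lambda>p. g (s p) - g p) summable_on UNIV" unfolding eq using sgs sgm by (rule summable_on_add)
  have "infsum (\<lambda>p. g (s p) - g p) UNIV = infsum (\<lambda>p. g (s p)) UNIV + infsum (\<lambda>p. - g p) UNIV"
    unfolding eq using sgs sgm by (rule infsum_add)
  also have "\<dots> = infsum g UNIV - infsum g UNIV"
    using infsum_reindex_bij_betw[OF bb, of g] by (simp add: infsum_uminus)
  finally show "infsum (\<lambda>p. g (s p) - g p) UNIV = 0" by simp
qed

lemma sum_combo:
  fixes fa fb fc ga gb :: "int \<times> int \<Rightarrow> real" and sa sb :: "int \<times> int \<Rightarrow> int \<times> int" and ca cb :: real
  assumes F0: "finite {p. fa p \<noteq> 0}" and F1: "finite {p. fb p \<noteq> 0}" and F2: "finite {p. fc p \<noteq> 0}"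
    and Fga: "finite {p. ga p \<noteq> 0}" and Fgb: "finite {p. gb p \<noteq> 0}" and ba: "bij sa" and bb: "bij sb"
    and pw: "\<And>p. ca * fa p + cb * fb p + fc p = (ga (sa p) - ga p) + (gb (sb p) - gb p)"
  shows "ca * infsum fa UNIV + cb * infsum fb UNIV + infsum fc UNIV = 0"
proof -
  have hs0: "fa summable_on UNIV" using F0 by (rule fin_summable)
  have hs1: "fb summable_on UNIV" using F1 by (rule fin_summable)
  have hs2: "fc summable_on UNIV" using F2 by (rule fin_summable)
  have hs0': "(\<lambda>p. ca * fa p) summable_on UNIV" using hs0 by (rule summable_on_cmult_right)
  have hs1': "(\<lambda>p. cb * fb p) summable_on UNIV" using hs1 by (rule summable_on_cmult_right)
  have hs01: "(\<lambda>p. ca * fa p + cb * fb p) summable_on UNIV" using hs0' hs1' by (rule summable_on_add)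
  have "ca * infsum fa UNIV + cb * infsum fb UNIV + infsum fc UNIV
      = infsum (\<lambda>p. ca * fa p) UNIV + infsum (\<lambda>p. cb * fb p) UNIV + infsum fc UNIV"
    by (simp add: infsum_cmult_right hs0 hs1)
  also have "\<dots> = infsum (\<lambda>p. ca * fa p + cb * fb p) UNIV + infsum fc UNIV"
    using infsum_add[OF hs0' hs1'] by simp
  also have "\<dots> = infsum (\<lambda>p. ca * fa p + cb * fb p + fc p) UNIV"
    using infsum_add[OF hs01 hs2] by simp
  also have "\<dots> = infsum (\<lambda>p. (ga (sa p) - ga p) + (gb (sb p) - gb p)) UNIV"
    using pw by simp
  also have "\<dots> = infsum (\<lambda>p. ga (sa p) - ga p) UNIV + infsum (\<lambda>p. gb (sb p) - gb p) UNIV"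
    by (rule infsum_add) (rule tele(1)[OF Fga ba], rule tele(1)[OF Fgb bb])
  also have "\<dots> = 0" using tele(2)[OF Fga ba] tele(2)[OF Fgb bb] by simp
  finally show ?thesis .
qed

lemma H_nz:
  assumes "H q a b k \<noteq> 0"
  shows "0 \<le> 2 * q - a - b - k \<and> 0 \<le> b - a + k \<and> 0 \<le> a - b + k \<and> 0 \<le> a + b - k"
  using assms unfolding H_def by (auto dest!: rf_nz)

lemma H_fin: "finite {p. (\<lambda>(l1, l2). H q l1 l2 k) p \<noteq> 0}"
  by (rule fin_supp[where ca = "2 * q - k" and cb = "- k" and cc = k and cd = k]) (auto dest!: H_nz)

lemma G1_fin: "finite {p. (\<lambda>(l1, l2). G1 q k l1 l2) p \<noteq> 0}"
  by (rule fin_supp[where ca = "2 * q - k + 4" and cb = "- k - 1" and cc = k and cd = "k - 1"])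
     (auto simp: G1_def E1_def dest!: rf_nz)

lemma G2_fin: "finite {p. (\<lambda>(l1, l2). G2 q k l1 l2) p \<noteq> 0}"
  by (rule fin_supp[where ca = "2 * q - k + 4" and cb = "- k - 1" and cc = "k - 1" and cd = k])
     (auto simp: G2_def E2_def dest!: rf_nz)

lemma G0_fin: "finite {p. G0 q p \<noteq> 0}"
  by (rule fin_supp[where ca = "2 * q + 6" and cb = "- 2" and cc = 0 and cd = 0])
     (auto simp: G0_def Z_def W_def split: if_splits dest!: rf_nz)

lemma bij_s1: "bij (\<lambda>(l1, l2). (l1 + 1 :: int, l2 :: int))"
proof (rule bijI)
  show "inj (\<lambda>(l1, l2). (l1 + 1 :: int, l2 :: int))" by (auto simp: inj_def)
  show "surj (\<lambda>(l1, l2). (l1 + 1 :: int, l2 :: int))" unfolding surj_def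
  proof
    fix y :: "int \<times> int"
    obtain a b where y: "y = (a, b)" by (cases y)
    show "\<exists>x. y = (\<lambda>(l1, l2). (l1 + 1 :: int, l2 :: int)) x" unfolding y by (rule exI[where x = "(\<lambda>(l1, l2). (l1 - 1 :: int, l2 :: int)) (a, b)"]) simp
  qed
qed

lemma bij_s2: "bij (\<lambda>(l1, l2). (l1 :: int, l2 + 1 :: int))"
proof (rule bijI)
  show "inj (\<lambda>(l1, l2). (l1 :: int, l2 + 1 :: int))" by (auto simp: inj_def)
  show "surj (\<lambda>(l1, l2). (l1 :: int, l2 + 1 :: int))" unfolding surj_def
  proof
    fix y :: "int \<times> int"
    obtain a b where y: "y = (a, b)" by (cases y)
    show "\<exists>x. y = (\<lambda>(l1, l2). (l1 :: int, l2 + 1 :: int)) x" unfolding y by (rule exI[where x = "(\<lambda>(l1, l2). (l1 :: int, l2 - 1 :: int)) (a, b)"]) simp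
  qed
qed

lemma bij_s0: "bij (\<lambda>(l1, l2). (l1 + 1 :: int, l2 + 1 :: int))"
proof (rule bijI)
  show "inj (\<lambda>(l1, l2). (l1 + 1 :: int, l2 + 1 :: int))" by (auto simp: inj_def)
  show "surj (\<lambda>(l1, l2). (l1 + 1 :: int, l2 + 1 :: int))" unfolding surj_def
  proof
    fix y :: "int \<times> int"
    obtain a b where y: "y = (a, b)" by (cases y)
    show "\<exists>x. y = (\<lambda>(l1, l2). (l1 + 1 :: int, l2 + 1 :: int)) x" unfolding y by (rule exI[where x = "(\<lambda>(l1, l2). (l1 - 1 :: int, l2 - 1 :: int)) (a, b)"]) simp
  qed
qed

lemma pw0:
  fixes q k :: int
  assumes "q \<ge> 1" "k = 0"
  shows "(of_int q)^2 / (8 * (2 * of_int k - 2 * of_int q - 3) * (of_int k - of_int q - 2)) * H q l1 l2 k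
       + (4 * of_int k * of_int q - 4 * (of_int q)^2 + 2 * of_int k - 7 * of_int q - 4)
           / (4 * (2 * of_int k - 2 * of_int q - 3) * (of_int k - of_int q - 2)) * H (q + 1) l1 l2 k
       + H (q + 2) l1 l2 k
     = (G0 q (l1 + 1, l2 + 1) - G0 q (l1, l2)) + (0 - 0)"
proof (cases "l1 = l2")
  case True
  thus ?thesis using pw0_diag[OF assms, of l2] by (simp add: G0_def)
next
  case False
  have "H q' l1 l2 k = 0" for q'
  proof -
    have "l2 - l1 + k < 0 \<or> l1 - l2 + k < 0" using False assms by auto
    thus ?thesis unfolding H_def using rf_neg by auto
  qed
  thus ?thesis using False by (simp add: G0_def)
qed

theorem lemma7p5:
  fixes q k :: int
  assumes "q \<ge> 1" and "k \<ge> 0" and "k \<noteq> q + 2"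
  shows "(of_int q)^2 / (8 * (2 * of_int k - 2 * of_int q - 3) * (of_int k - of_int q - 2)) * S q k
       + (4 * of_int k * of_int q - 4 * (of_int q)^2 + 2 * of_int k - 7 * of_int q - 4)
           / (4 * (2 * of_int k - 2 * of_int q - 3) * (of_int k - of_int q - 2)) * S (q + 1) k
       + S (q + 2) k = (0::real)"
proof (cases "k = 0")
  case True
  show ?thesis unfolding S_def
  proof (rule sum_combo[where gb = "\<lambda>p. 0" and sa = "\<lambda>(l1, l2). (l1 + 1, l2 + 1)" and sb = id, OF H_fin H_fin H_fin G0_fin])
    show "finite {p. (0::real) \<noteq> 0}" by simp
    show "bij (\<lambda>(l1, l2). (l1 + 1 :: int, l2 + 1 :: int))" by (rule bij_s0)
    show "bij (id :: int \<times> int \<Rightarrow> int \<times> int)" by simp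
    fix p :: "int \<times> int"
    obtain a b where p: "p = (a, b)" by (cases p)
    show "(of_int q)^2 / (8 * (2 * of_int k - 2 * of_int q - 3) * (of_int k - of_int q - 2)) * (case p of (l1, l2) \<Rightarrow> H q l1 l2 k)
       + (4 * of_int k * of_int q - 4 * (of_int q)^2 + 2 * of_int k - 7 * of_int q - 4)
           / (4 * (2 * of_int k - 2 * of_int q - 3) * (of_int k - of_int q - 2)) * (case p of (l1, l2) \<Rightarrow> H (q + 1) l1 l2 k)
       + (case p of (l1, l2) \<Rightarrow> H (q + 2) l1 l2 k)
     = (G0 q (case p of (l1, l2) \<Rightarrow> (l1 + 1, l2 + 1)) - G0 q p) + ((0::real) - 0)"
      unfolding p using pw0[OF assms(1) True, of a b] by simp
  qed
next
  case False
  hence k1: "k \<ge> 1" using assms by simp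
  show ?thesis unfolding S_def
  proof (rule sum_combo[OF H_fin H_fin H_fin G1_fin G2_fin bij_s1 bij_s2])
    fix p :: "int \<times> int"
    obtain a b where p: "p = (a, b)" by (cases p)
    show "(of_int q)^2 / (8 * (2 * of_int k - 2 * of_int q - 3) * (of_int k - of_int q - 2)) * (case p of (l1, l2) \<Rightarrow> H q l1 l2 k)
       + (4 * of_int k * of_int q - 4 * (of_int q)^2 + 2 * of_int k - 7 * of_int q - 4)
           / (4 * (2 * of_int k - 2 * of_int q - 3) * (of_int k - of_int q - 2)) * (case p of (l1, l2) \<Rightarrow> H (q + 1) l1 l2 k)
       + (case p of (l1, l2) \<Rightarrow> H (q + 2) l1 l2 k)
     = ((case (case p of (l1, l2) \<Rightarrow> (l1 + 1, l2)) of (l1, l2) \<Rightarrow> G1 q k l1 l2) - (case p of (l1, l2) \<Rightarrow> G1 q k l1 l2))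
       + ((case (case p of (l1, l2) \<Rightarrow> (l1, l2 + 1)) of (l1, l2) \<Rightarrow> G2 q k l1 l2) - (case p of (l1, l2) \<Rightarrow> G2 q k l1 l2))"
      unfolding p using pw2[OF assms(1) k1 assms(3), of a b] by simp
  qed
qed

end
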